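(* Let $m=(i,k,\nu)$ with $i\in\{1,\ldots,N\}$, $k\in\{1,\ldots,n\}$, $\nu\in\{1,2\}$, and let $r>0$. Write $\psi_i^{-1}(\leq r)=\{p\in\mathbb{R}^{nN}\mid\psi_i(p)\leq r\}$. (a) The function $h_\nu\circ\psi_i$ is of class $C^1$, and (i) $h_\nu\circ\psi_i$ is bounded by a multiple of $\psi_i$ on $\psi_i^{-1}(\leq r)$; (ii) $\nabla(h_\nu\circ\psi_i)$ is bounded by a multiple of $\psi_i^{1/2}$ on $\psi_i^{-1}(\leq r)$. (b) The Lie derivative $X_m\psi$ is of class $C^2$, and (i) $X_m\psi$ is bounded by a multiple of $\psi_i^{3/2}$ on $\psi_i^{-1}(\leq r)$; (ii) $\nabla(X_m\psi)$ is bounded by a multiple of $\psi_i$ on $\psi_i^{-1}(\leq r)$; (iii) $\mathrm{D}^2(X_m\psi)$ is bounded by a multiple of $\psi_i^{1/2}$ on $\psi_i^{-1}(\leq r)$.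
   Context: $G=(V,E)$ is an undirected graph with $V=\{1,\ldots,N\}$ and nonempty edge set $E$ of two-element subsets (edges $ij$); $d_{ij}\geq0$ for $ij\in E$. For $p=(p_1,\ldots,p_N)\in\mathbb{R}^{nN}$: $\psi_i(p)=\frac14\sum_{j:\,ij\in E}(\|p_j-p_i\|^2-d_{ij}^2)^2$ and $\psi(p)=\frac14\sum_{ij\in E}(\|p_j-p_i\|^2-d_{ij}^2)^2$. For each $i$, $b_{i,1},\ldots,b_{i,n}$ is an orthonormal basis of $\mathbb{R}^n$; $B_{i,k}:\mathbb{R}^{nN}\to\mathbb{R}^{nN}$ is the constant vector field whose $i$-th block in $\mathbb{R}^n$ is $b_{i,k}$ and other blocks are $0$. $X_m(p):=h_\nu(\psi_i(p))B_{i,k}(p)$ for $m=(i,k,\nu)$, and $X_m\psi(p)=\mathrm{D}\psi(p)X_m(p)$ is the Lie derivative. The functions $h_1,h_2:\mathbb{R}\to\mathbb{R}$ satisfy, for $\nu=1,2$: (i) $h_\nu(y)=0$ for $y\leq 0$; (ii) $h_\nu$ is bounded and of class $C^2$ on $(0,\infty)$; (iii) $h_\nu(y)/y$ remains bounded as $y\downarrow 0$; (iv) $h_\nu'(y)$ remains bounded as $y\downarrow0$; (v) $h_\nu''(y)\,y$ remains bounded as $y\downarrow 0$; (vi) there exist $r',c'>0$ with $h_2'(y)h_1(y)-h_1'(y)h_2(y)\leq -c'y$ for all $y\in(0,r']$. Terminology: for a nonnegative function $b$ and a set $W$, a function $f$ is bounded by a multiple of $b$ on $W$ if there is $c>0$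 with $|f(x)|\leq c\,b(x)$ for all $x\in W$; a vector field $X$ if $\|X(x)\|\leq c\,b(x)$; a bilinear-form-valued map $A$ if $|A(x)(v,w)|\leq c\,b(x)\|v\|\|w\|$ for all $x\in W$ and all $v,w$. *)

theory Defs
  imports "HOL-Analysis.Analysis"
begin

definition C1_on :: "'a::real_normed_vector set \<Rightarrow> ('a \<Rightarrow> 'b::real_normed_vector) \<Rightarrow> bool" where
  "C1_on S f \<longleftrightarrow> (\<exists>f'. (\<forall>x\<in>S. (f has_derivative blinfun_apply (f' x)) (at x)) \<and> continuous_on S f')"

definition C2_on :: "'a::real_normed_vector set \<Rightarrow> ('a \<Rightarrow> 'b::real_normed_vector) \<Rightarrow> bool" where
  "C2_on S f \<longleftrightarrow> (\<exists>f' f''. (\<forall>x\<in>S. (f has_derivative blinfun_apply (f' x)) (at x))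
      \<and> (\<forall>x\<in>S. (f' has_derivative blinfun_apply (f'' x)) (at x)) \<and> continuous_on S f'')"

definition D2 :: "('a::real_normed_vector \<Rightarrow> real) \<Rightarrow> 'a \<Rightarrow> 'a \<Rightarrow> 'a \<Rightarrow> real" where
  "D2 f p v w = frechet_derivative (\<lambda>q. frechet_derivative f (at q) v) (at p) w"

text \<open>Configurations p in R^{nN}: p $ i is the position of vertex i in R^n.\<close>
definition psi_i :: "('v::finite set \<Rightarrow> real) \<Rightarrow> 'v set set \<Rightarrow> 'v \<Rightarrow> real^'n^'v \<Rightarrow> real" where
  "psi_i d E i p = (1/4) * (\<Sum>j\<in>{j. {i,j} \<in> E}. ((norm (p$j - p$i))^2 - (d {i,j})^2)^2)"

definition edge_term :: "('v::finite set \<Rightarrow> real) \<Rightarrow> real^'n^'v \<Rightarrow> 'v set \<Rightarrow> real" where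
  "edge_term d p e = (THE t. \<exists>i j. e = {i,j} \<and> i \<noteq> j \<and> t = ((norm (p$j - p$i))^2 - (d e)^2)^2)"

definition psi :: "('v::finite set \<Rightarrow> real) \<Rightarrow> 'v set set \<Rightarrow> real^'n^'v \<Rightarrow> real" where
  "psi d E p = (1/4) * (\<Sum>e\<in>E. edge_term d p e)"

definition Bfield :: "('v::finite \<Rightarrow> 'n \<Rightarrow> real^'n) \<Rightarrow> 'v \<Rightarrow> 'n \<Rightarrow> real^'n^'v" where
  "Bfield b i k = (\<chi> j. if j = i then b i k else 0)"

definition Xfield :: "(nat \<Rightarrow> real \<Rightarrow> real) \<Rightarrow> ('v::finite set \<Rightarrow> real) \<Rightarrow> 'v set set
    \<Rightarrow> ('v \<Rightarrow> 'n \<Rightarrow> real^'n) \<Rightarrow> 'v \<Rightarrow> 'n \<Rightarrow> nat \<Rightarrow> real^'n^'v \<Rightarrow> real^'n^'v" where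
  "Xfield h d E b i k \<nu> p = h \<nu> (psi_i d E i p) *\<^sub>R Bfield b i k"

definition lie :: "('a::real_normed_vector \<Rightarrow> 'a) \<Rightarrow> ('a \<Rightarrow> real) \<Rightarrow> 'a \<Rightarrow> real" where
  "lie X f p = frechet_derivative f (at p) (X p)"

end

theory Submission
  imports Defs "HOL-Analysis.Analysis"
begin

lemma hd_blinfun_comp:
  fixes f :: "'a::real_normed_vector \<Rightarrow> 'b::euclidean_space \<Rightarrow>\<^sub>L 'c::real_normed_vector"
  assumes "\<And>e. e \<in> Basis \<Longrightarrow> ((\<lambda>y. blinfun_apply (f y) e) has_derivative (\<lambda>h. blinfun_apply (D h) e)) (at x)"
    and "bounded_linear D"
  shows "(f has_derivative D) (at x)"
proof -
  interpret D: bounded_linear D by fact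
  have "((\<lambda>y. (1 / norm (y - x)) *\<^sub>R (f y - (f x + D (y - x)))) \<longlongrightarrow> 0) (at x)"
  proof (rule tendsto_componentwise1)
    fix e :: 'b assume e: "e \<in> Basis"
    from assms(1)[OF e] have "((\<lambda>y. (1 / norm (y - x)) *\<^sub>R (f y e - (f x e + D (y - x) e))) \<longlongrightarrow> 0) (at x)"
      unfolding has_derivative_at2 by simp
    then show "((\<lambda>y. blinfun_apply ((1 / norm (y - x)) *\<^sub>R (f y - (f x + D (y - x)))) e) \<longlongrightarrow> blinfun_apply 0 e) (at x)"
      by (simp add: blinfun.bilinear_simps)
  qed
  then show ?thesis unfolding has_derivative_at2 using assms(2) by simp
qed

lemma dom_deriv0:
  fixes G :: "'a::real_normed_vector \<Rightarrow> 'c::real_normed_vector"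
  assumes "(\<psi> has_derivative (\<lambda>_. 0)) (at x)" "\<psi> x = 0" "G x = 0"
    and "eventually (\<lambda>y. norm (G y) \<le> K * \<psi> y) (at x)"
  shows "(G has_derivative (\<lambda>_. 0)) (at x)"
proof -
  from assms(1) have L: "((\<lambda>y. norm ((\<psi> y - \<psi> x) - 0) / norm (y - x)) \<longlongrightarrow> 0) (at x)"
    unfolding has_derivative_iff_norm by simp
  have "((\<lambda>y. norm ((G y - G x) - 0) / norm (y - x)) \<longlongrightarrow> 0) (at x)"
  proof (rule tendsto_0_le[OF L, where K="\<bar>K\<bar>"])
    show "\<forall>\<^sub>F y in at x. norm (norm (G y - G x - 0) / norm (y - x)) \<le> norm (norm (\<psi> y - \<psi> x - 0) / norm (y - x)) * \<bar>K\<bar>"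
      using assms(4)
    proof eventually_elim
      case (elim y)
      have "norm (G y) \<le> \<bar>K\<bar> * \<bar>\<psi> y\<bar>"
        using elim by (metis abs_ge_self abs_mult order_trans)
      then show ?case using assms(2,3)
        by (simp add: divide_right_mono mult.commute)
    qed
  qed
  then show ?thesis unfolding has_derivative_iff_norm by simp
qed

lemma dom_cont0:
  fixes G :: "'a::real_normed_vector \<Rightarrow> real"
  assumes "isCont \<psi> x" "\<psi> x = 0" "G x = 0"
    and "eventually (\<lambda>y. \<bar>G y\<bar> \<le> K * sqrt (\<psi> y)) (at x)"
  shows "isCont G x"
proof -
  have "((\<lambda>y. sqrt (\<psi> y)) \<longlongrightarrow> 0) (at x)"
    using assms(1,2) tendsto_real_sqrt[of \<psi> "\<psi> x" "at x"] unfolding isCont_def by simp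
  then have "(G \<longlongrightarrow> 0) (at x)"
  proof (rule tendsto_0_le[where K="\<bar>K\<bar>"])
    show "\<forall>\<^sub>F y in at x. norm (G y) \<le> norm (sqrt (\<psi> y)) * \<bar>K\<bar>"
      using assms(4)
    proof eventually_elim
      case (elim y)
      have "K * sqrt (\<psi> y) \<le> \<bar>sqrt (\<psi> y)\<bar> * \<bar>K\<bar>"
        by (metis abs_ge_self abs_mult mult.commute)
      then show ?case using elim by simp
    qed
  qed
  then show ?thesis unfolding isCont_def using assms(3) by simp
qed


lemma abs_mult_le: "\<bar>a\<bar> \<le> A \<Longrightarrow> \<bar>b\<bar> \<le> B \<Longrightarrow> \<bar>a * b\<bar> \<le> A * (B::real)"
  by (simp add: abs_mult mult_mono')

locale core =
  fixes \<psi> :: "'a::euclidean_space \<Rightarrow> real" and \<psi>1 :: "'a \<Rightarrow> 'a \<Rightarrow> real" and \<psi>2 :: "'a \<Rightarrow> 'a \<Rightarrow> 'a \<Rightarrow> real"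
    and g :: "'a \<Rightarrow> real" and g1 :: "'a \<Rightarrow> 'a \<Rightarrow> real" and g2 :: "'a \<Rightarrow> 'a \<Rightarrow> 'a \<Rightarrow> real"
    and h h1 h2 :: "real \<Rightarrow> real" and r c :: real
  assumes psi_d: "\<And>x. (\<psi> has_derivative \<psi>1 x) (at x)"
    and psi1_d: "\<And>x v. ((\<lambda>y. \<psi>1 y v) has_derivative (\<lambda>w. \<psi>2 x w v)) (at x)"
    and psi2_c: "\<And>w v. continuous_on UNIV (\<lambda>x. \<psi>2 x w v)"
    and psi2_bl: "\<And>x. bilinear (\<psi>2 x)"
    and g_d: "\<And>x. (g has_derivative g1 x) (at x)"
    and g1_d: "\<And>x v. ((\<lambda>y. g1 y v) has_derivative (\<lambda>w. g2 x w v)) (at x)"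
    and g2_c: "\<And>w v. continuous_on UNIV (\<lambda>x. g2 x w v)"
    and g2_bl: "\<And>x. bilinear (g2 x)"
    and psi_nn: "\<And>x. \<psi> x \<ge> 0"
    and h0: "\<And>y. y \<le> 0 \<Longrightarrow> h y = 0"
    and hd: "\<And>y. y > 0 \<Longrightarrow> (h has_real_derivative h1 y) (at y)"
    and h1d: "\<And>y. y > 0 \<Longrightarrow> (h1 has_real_derivative h2 y) (at y)"
    and h2c: "continuous_on {0<..} h2"
    and r_pos: "r > 0" and c_pos: "c > 0"
    and hb: "\<And>y. 0 < y \<Longrightarrow> y \<le> r \<Longrightarrow> \<bar>h y\<bar> \<le> c * y"
    and h1b: "\<And>y. 0 < y \<Longrightarrow> y \<le> r \<Longrightarrow> \<bar>h1 y\<bar> \<le> c"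
    and h2b: "\<And>y. 0 < y \<Longrightarrow> y \<le> r \<Longrightarrow> \<bar>h2 y * y\<bar> \<le> c"
    and psi1b: "\<And>x v. \<psi> x \<le> r \<Longrightarrow> \<bar>\<psi>1 x v\<bar> \<le> c * sqrt (\<psi> x) * norm v"
    and psi2b: "\<And>x w v. \<psi> x \<le> r \<Longrightarrow> \<bar>\<psi>2 x w v\<bar> \<le> c * norm w * norm v"
    and gb: "\<And>x. \<psi> x \<le> r \<Longrightarrow> \<bar>g x\<bar> \<le> c * sqrt (\<psi> x)"
    and g1b: "\<And>x v. \<psi> x \<le> r \<Longrightarrow> \<bar>g1 x v\<bar> \<le> c * norm v"
    and g2b: "\<And>x w v. \<psi> x \<le> r \<Longrightarrow> \<bar>g2 x w v\<bar> \<le> c * norm w * norm v"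
begin

definition "H1f y = (if y > 0 then h1 y else 0)"
definition "H2f y = (if y > 0 then h2 y else 0)"
definition "Hd p v = H1f (\<psi> p) * \<psi>1 p v"
definition "Fd p v = Hd p v * g p + h (\<psi> p) * g1 p v"
definition "Fdd p w v = H2f (\<psi> p) * \<psi>1 p w * \<psi>1 p v * g p
   + H1f (\<psi> p) * (\<psi>2 p w v * g p + \<psi>1 p v * g1 p w + \<psi>1 p w * g1 p v) + h (\<psi> p) * g2 p w v"

lemma H1f_deriv: "y > 0 \<Longrightarrow> (H1f has_real_derivative h2 y) (at y)"
  by (rule has_field_derivative_transform_within_open[OF h1d, of y "{0<..}"]) (auto simp: H1f_def)

lemma h_H1f: "y > 0 \<Longrightarrow> (h has_real_derivative H1f y) (at y)"
  using hd by (simp add: H1f_def)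

lemma H2f_cont: "y > 0 \<Longrightarrow> isCont H2f y"
proof -
  assume y: "y > 0"
  have "isCont h2 y" using h2c y continuous_on_eq_continuous_at[of "{0<..}" h2] by auto
  moreover have "eventually (\<lambda>x. H2f x = h2 x) (nhds y)"
    using y by (intro eventually_nhds_in_open[of "{0<..}", THEN eventually_mono]) (auto simp: H2f_def)
  ultimately show ?thesis using isCont_cong by blast
qed

lemma H1f_cont: "y > 0 \<Longrightarrow> isCont H1f y"
  using H1f_deriv DERIV_isCont by blast

lemma psi_cont: "isCont \<psi> x"
  using psi_d has_derivative_continuous by blast

lemma ev_r: "\<psi> p < r \<Longrightarrow> eventually (\<lambda>y. \<psi> y \<le> r) (at p)"
proof -
  assume "\<psi> p < r"
  then have "eventually (\<lambda>y. \<psi> y < r) (at p)"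
    using order_tendstoD(2)[OF psi_cont[of p, unfolded isCont_def]] by blast
  then show ?thesis by (rule eventually_mono) auto
qed

lemma psi1_zero: "\<psi> x = 0 \<Longrightarrow> \<psi>1 x v = 0"
  using psi1b[of x v] r_pos by simp

lemma psi_d0: "\<psi> x = 0 \<Longrightarrow> (\<psi> has_derivative (\<lambda>_. 0)) (at x)"
proof -
  assume "\<psi> x = 0"
  then have "\<psi>1 x = (\<lambda>_. 0)" using psi1_zero by auto
  then show ?thesis using psi_d[of x] by simp
qed

lemma hpsi_b: "\<psi> x \<le> r \<Longrightarrow> \<bar>h (\<psi> x)\<bar> \<le> c * \<psi> x"
  using hb[of "\<psi> x"] h0[of 0] psi_nn[of x] by (cases "\<psi> x = 0") auto

lemma H1f_b: "\<psi> x \<le> r \<Longrightarrow> \<bar>H1f (\<psi> x)\<bar> \<le> c"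
  using h1b[of "\<psi> x"] c_pos by (auto simp: H1f_def)

lemma H2f_b: "\<psi> x \<le> r \<Longrightarrow> \<bar>H2f (\<psi> x)\<bar> * \<psi> x \<le> c"
  using h2b[of "\<psi> x"] c_pos psi_nn[of x] by (auto simp: H2f_def abs_mult)

lemma sq_psi: "sqrt (\<psi> x) * sqrt (\<psi> x) = \<psi> x"
  using psi_nn[of x] by simp

lemma Hd_b: "\<psi> x \<le> r \<Longrightarrow> \<bar>Hd x v\<bar> \<le> c^2 * sqrt (\<psi> x) * norm v"
proof -
  assume a: "\<psi> x \<le> r"
  have "\<bar>Hd x v\<bar> \<le> c * (c * sqrt (\<psi> x) * norm v)"
    unfolding Hd_def by (rule abs_mult_le[OF H1f_b[OF a] psi1b[OF a]])
  then show ?thesis by (simp add: power2_eq_square mult.assoc)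
qed

lemma Fd_b: "\<psi> x \<le> r \<Longrightarrow> \<bar>Fd x v\<bar> \<le> (c^3 + c^2) * \<psi> x * norm v"
proof -
  assume a: "\<psi> x \<le> r"
  have 1: "\<bar>Hd x v * g x\<bar> \<le> (c^2 * sqrt (\<psi> x) * norm v) * (c * sqrt (\<psi> x))"
    by (rule abs_mult_le[OF Hd_b[OF a] gb[OF a]])
  have 2: "\<bar>h (\<psi> x) * g1 x v\<bar> \<le> (c * \<psi> x) * (c * norm v)"
    by (rule abs_mult_le[OF hpsi_b[OF a] g1b[OF a]])
  have e1: "(c^2 * sqrt (\<psi> x) * norm v) * (c * sqrt (\<psi> x)) = c^3 * (sqrt (\<psi> x) * sqrt (\<psi> x)) * norm v"
    by (simp add: power2_eq_square power3_eq_cube algebra_simps)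
  have e2: "(c * \<psi> x) * (c * norm v) = c^2 * \<psi> x * norm v"
    by (simp add: power2_eq_square algebra_simps)
  have e3: "(c^3 + c^2) * \<psi> x * norm v = c^3 * \<psi> x * norm v + c^2 * \<psi> x * norm v"
    by (simp add: algebra_simps)
  have e1': "(c^2 * sqrt (\<psi> x) * norm v) * (c * sqrt (\<psi> x)) = c^3 * \<psi> x * norm v"
    by (simp only: e1 sq_psi)
  show ?thesis unfolding Fd_def using 1 2 e1' e2 e3
      abs_triangle_ineq[of "Hd x v * g x" "h (\<psi> x) * g1 x v"] by linarith
qed

end

context core begin

lemma Fdd_b: assumes a: "\<psi> x \<le> r"
  shows "\<bar>Fdd x w v\<bar> \<le> (c^4 + 3*c^3 + c^2* sqrt r) * (sqrt (\<psi> x) * norm w * norm v)"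
proof -
  define s where "s = sqrt (\<psi> x)"
  define W where "W = norm w"
  define V where "V = norm v"
  define X where "X = s * W * V"
  have s0: "s \<ge> 0" using psi_nn[of x] by (simp add: s_def)
  have ss: "s * s = \<psi> x" using psi_nn[of x] by (simp add: s_def)
  have sr: "s \<le> sqrt r" using a by (simp add: s_def)
  have W0: "W \<ge> 0" and V0: "V \<ge> 0" by (simp_all add: W_def V_def)
  have X0: "X \<ge> 0" using s0 W0 V0 by (simp add: X_def)
  have c0: "c \<ge> 0" using c_pos by simp
  have p1w: "\<bar>\<psi>1 x w\<bar> \<le> c* s*W" using psi1b[OF a] by (simp add: s_def W_def)
  have p1v: "\<bar>\<psi>1 x v\<bar> \<le> c* s*V" using psi1b[OF a] by (simp add: s_def V_def)
  have gx: "\<bar>g x\<bar> \<le> c* s" using gb[OF a] by (simp add: s_def)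
  have g1w: "\<bar>g1 x w\<bar> \<le> c*W" using g1b[OF a] by (simp add: W_def)
  have g1v: "\<bar>g1 x v\<bar> \<le> c*V" using g1b[OF a] by (simp add: V_def)
  have p2: "\<bar>\<psi>2 x w v\<bar> \<le> c*W*V" using psi2b[OF a] by (simp add: W_def V_def)
  have g2: "\<bar>g2 x w v\<bar> \<le> c*W*V" using g2b[OF a] by (simp add: W_def V_def)
  have A0: "\<bar>\<psi>1 x w * \<psi>1 x v\<bar> \<le> (c* s*W) * (c* s*V)" by (rule abs_mult_le[OF p1w p1v])
  have "(c* s*W) * (c* s*V) = c^2 * (s* s) * (W*V)" by (simp add: power2_eq_square mult_ac)
  with A0 ss have A: "\<bar>\<psi>1 x w * \<psi>1 x v\<bar> \<le> c^2 * \<psi> x * (W*V)" by simp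
  have "\<bar>H2f (\<psi> x) * (\<psi>1 x w * \<psi>1 x v)\<bar> = \<bar>H2f (\<psi> x)\<bar> * \<bar>\<psi>1 x w * \<psi>1 x v\<bar>" by (simp add: abs_mult)
  also have "\<dots> \<le> \<bar>H2f (\<psi> x)\<bar> * (c^2 * \<psi> x * (W*V))" by (rule mult_left_mono[OF A]) simp
  also have "\<dots> = (\<bar>H2f (\<psi> x)\<bar> * \<psi> x) * (c^2 * (W*V))" by (simp add: mult_ac)
  also have "\<dots> \<le> c * (c^2 * (W*V))" by (rule mult_right_mono[OF H2f_b[OF a]]) (simp add: W0 V0)
  finally have B: "\<bar>H2f (\<psi> x) * (\<psi>1 x w * \<psi>1 x v)\<bar> \<le> c * (c^2 * (W*V))" .
  have T1a: "\<bar>H2f (\<psi> x) * (\<psi>1 x w * \<psi>1 x v) * g x\<bar> \<le> (c * (c^2 * (W*V))) * (c* s)"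
    by (rule abs_mult_le[OF B gx])
  have "(c * (c^2 * (W*V))) * (c* s) = c^4 * X" by (simp add: X_def power2_eq_square power4_eq_xxxx mult_ac)
  with T1a have T1: "\<bar>H2f (\<psi> x) * \<psi>1 x w * \<psi>1 x v * g x\<bar> \<le> c^4 * X" by (simp add: mult.assoc)
  have I1a: "\<bar>\<psi>2 x w v * g x\<bar> \<le> (c*W*V) * (c* s)" by (rule abs_mult_le[OF p2 gx])
  have I2a: "\<bar>\<psi>1 x v * g1 x w\<bar> \<le> (c* s*V) * (c*W)" by (rule abs_mult_le[OF p1v g1w])
  have I3a: "\<bar>\<psi>1 x w * g1 x v\<bar> \<le> (c* s*W) * (c*V)" by (rule abs_mult_le[OF p1w g1v])
  have e1: "(c*W*V) * (c* s) = c^2 * X" "(c* s*V) * (c*W) = c^2 * X" "(c* s*W) * (c*V) = c^2 * X"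
    by (simp_all add: X_def power2_eq_square mult_ac)
  have I: "\<bar>\<psi>2 x w v * g x + \<psi>1 x v * g1 x w + \<psi>1 x w * g1 x v\<bar> \<le> 3 * c^2 * X"
    using I1a I2a I3a e1 abs_triangle_ineq[of "\<psi>2 x w v * g x + \<psi>1 x v * g1 x w" "\<psi>1 x w * g1 x v"]
      abs_triangle_ineq[of "\<psi>2 x w v * g x" "\<psi>1 x v * g1 x w"] by linarith
  have T2a: "\<bar>H1f (\<psi> x) * (\<psi>2 x w v * g x + \<psi>1 x v * g1 x w + \<psi>1 x w * g1 x v)\<bar> \<le> c * (3 * c^2 * X)"
    by (rule abs_mult_le[OF H1f_b[OF a] I])
  have "c * (3 * c^2 * X) = 3 * c^3 * X" by (simp add: power2_eq_square power3_eq_cube)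
  with T2a have T2: "\<bar>H1f (\<psi> x) * (\<psi>2 x w v * g x + \<psi>1 x v * g1 x w + \<psi>1 x w * g1 x v)\<bar> \<le> 3 * c^3 * X"
    by simp
  have T3a: "\<bar>h (\<psi> x) * g2 x w v\<bar> \<le> (c * \<psi> x) * (c*W*V)" by (rule abs_mult_le[OF hpsi_b[OF a] g2])
  have "(c * \<psi> x) * (c*W*V) = (s * s) * (c^2 * W * V)" using ss by (simp add: power2_eq_square mult_ac)
  also have "\<dots> \<le> (sqrt r * s) * (c^2 * W * V)"
    by (rule mult_right_mono[OF mult_right_mono[OF sr s0]]) (simp add: W0 V0)
  also have "\<dots> = c^2 * sqrt r * X" by (simp add: X_def mult_ac)
  finally have T3: "\<bar>h (\<psi> x) * g2 x w v\<bar> \<le> c^2 * sqrt r * X" using T3a by linarith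
  have "\<bar>Fdd x w v\<bar> \<le> c^4 * X + 3 * c^3 * X + c^2 * sqrt r * X"
    unfolding Fdd_def using T1 T2 T3
      abs_triangle_ineq[of "H2f (\<psi> x) * \<psi>1 x w * \<psi>1 x v * g x + H1f (\<psi> x) * (\<psi>2 x w v * g x + \<psi>1 x v * g1 x w + \<psi>1 x w * g1 x v)" "h (\<psi> x) * g2 x w v"]
      abs_triangle_ineq[of "H2f (\<psi> x) * \<psi>1 x w * \<psi>1 x v * g x" "H1f (\<psi> x) * (\<psi>2 x w v * g x + \<psi>1 x v * g1 x w + \<psi>1 x w * g1 x v)"]
    by linarith
  then show ?thesis by (simp add: X_def s_def W_def V_def algebra_simps)
qed

end

context core begin

lemma H_deriv: "((\<lambda>p. h (\<psi> p)) has_derivative Hd p) (at p)"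
proof (cases "\<psi> p > 0")
  case True
  show ?thesis
    by (rule has_derivative_eq_rhs[OF DERIV_compose_FDERIV[OF h_H1f[OF True] psi_d]])
      (simp add: Hd_def fun_eq_iff mult.commute)
next
  case False
  then have p0: "\<psi> p = 0" using psi_nn[of p] by simp
  have "((\<lambda>p. h (\<psi> p)) has_derivative (\<lambda>_. 0)) (at p)"
  proof (rule dom_deriv0[OF psi_d0[OF p0] p0, where K=c])
    show "h (\<psi> p) = 0" using p0 h0 by simp
    show "\<forall>\<^sub>F y in at p. norm (h (\<psi> y)) \<le> c * \<psi> y"
      using ev_r[of p] p0 r_pos by (auto elim!: eventually_mono dest: hpsi_b)
  qed
  moreover have "Hd p = (\<lambda>_. 0)" using p0 by (auto simp: Hd_def H1f_def)
  ultimately show ?thesis by simp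
qed

lemma F_deriv: "((\<lambda>p. h (\<psi> p) * g p) has_derivative Fd p) (at p)"
  by (rule has_derivative_eq_rhs[OF has_derivative_mult[OF H_deriv g_d]])
    (simp add: Fd_def fun_eq_iff algebra_simps)

lemma Fd_deriv: "((\<lambda>y. Fd y v) has_derivative (\<lambda>w. Fdd p w v)) (at p)"
proof (cases "\<psi> p > 0")
  case True
  have e: "(\<lambda>y. Fd y v) = (\<lambda>y. H1f (\<psi> y) * \<psi>1 y v * g y + h (\<psi> y) * g1 y v)"
    by (simp add: Fd_def Hd_def fun_eq_iff)
  note A = DERIV_compose_FDERIV[OF H1f_deriv[OF True] psi_d]
  note B = DERIV_compose_FDERIV[OF h_H1f[OF True] psi_d]
  note D = has_derivative_add[OF has_derivative_mult[OF has_derivative_mult[OF A psi1_d] g_d] has_derivative_mult[OF B g1_d]]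
  show ?thesis unfolding e
    by (rule has_derivative_eq_rhs[OF D]) (simp add: Fdd_def H2f_def True fun_eq_iff algebra_simps)
next
  case False
  then have p0: "\<psi> p = 0" using psi_nn[of p] by simp
  have "((\<lambda>y. Fd y v) has_derivative (\<lambda>_. 0)) (at p)"
  proof (rule dom_deriv0[OF psi_d0[OF p0] p0, where K="(c^3 + c^2) * norm v"])
    show "Fd p v = 0" using p0 h0 by (simp add: Fd_def Hd_def H1f_def)
    show "\<forall>\<^sub>F y in at p. norm (Fd y v) \<le> (c^3 + c^2) * norm v * \<psi> y"
      using ev_r[of p] p0 r_pos by (auto elim!: eventually_mono dest: Fd_b[of _ v] simp: mult_ac)
  qed
  moreover have "(\<lambda>w. Fdd p w v) = (\<lambda>_. 0)" using p0 h0 by (auto simp: Fdd_def H1f_def H2f_def)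
  ultimately show ?thesis by simp
qed

lemma psi1_cont: "isCont (\<lambda>y. \<psi>1 y v) x"
  using psi1_d has_derivative_continuous by blast
lemma g1_cont: "isCont (\<lambda>y. g1 y v) x"
  using g1_d has_derivative_continuous by blast
lemma g_cont: "isCont g x"
  using g_d has_derivative_continuous by blast
lemma hpsi_cont: "isCont (\<lambda>y. h (\<psi> y)) x"
  using H_deriv has_derivative_continuous by blast
lemma psi2_cont: "isCont (\<lambda>y. \<psi>2 y w v) x"
  using psi2_c[of w v] continuous_on_eq_continuous_at[of UNIV] by auto
lemma g2_cont: "isCont (\<lambda>y. g2 y w v) x"
  using g2_c[of w v] continuous_on_eq_continuous_at[of UNIV] by auto

lemma Hd_cont: "isCont (\<lambda>y. Hd y v) p"
proof (cases "\<psi> p > 0")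
  case True
  have "isCont (\<lambda>y. H1f (\<psi> y)) p" by (rule isCont_o2[OF psi_cont H1f_cont[OF True]])
  then show ?thesis unfolding Hd_def by (intro isCont_mult psi1_cont)
next
  case False
  then have p0: "\<psi> p = 0" using psi_nn[of p] by simp
  show ?thesis
  proof (rule dom_cont0[OF psi_cont p0, where K="c^2 * norm v"])
    show "Hd p v = 0" using p0 by (simp add: Hd_def H1f_def)
    show "\<forall>\<^sub>F y in at p. \<bar>Hd y v\<bar> \<le> c^2 * norm v * sqrt (\<psi> y)"
      using ev_r[of p] p0 r_pos by (auto elim!: eventually_mono dest: Hd_b[of _ v] simp: mult_ac)
  qed
qed

lemma Fdd_cont: "isCont (\<lambda>y. Fdd y w v) p"
proof (cases "\<psi> p > 0")
  case True
  have 1: "isCont (\<lambda>y. H1f (\<psi> y)) p" by (rule isCont_o2[OF psi_cont H1f_cont[OF True]])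
  have 2: "isCont (\<lambda>y. H2f (\<psi> y)) p" by (rule isCont_o2[OF psi_cont H2f_cont[OF True]])
  show ?thesis unfolding Fdd_def
    by (intro isCont_mult isCont_add 1 2 psi1_cont g1_cont g_cont hpsi_cont psi2_cont g2_cont)
next
  case False
  then have p0: "\<psi> p = 0" using psi_nn[of p] by simp
  show ?thesis
  proof (rule dom_cont0[OF psi_cont p0, where K="(c^4 + 3*c^3 + c^2 * sqrt r) * norm w * norm v"])
    show "Fdd p w v = 0" using p0 h0 by (simp add: Fdd_def H1f_def H2f_def)
    show "\<forall>\<^sub>F y in at p. \<bar>Fdd y w v\<bar> \<le> (c^4 + 3*c^3 + c^2 * sqrt r) * norm w * norm v * sqrt (\<psi> y)"
      using ev_r[of p] p0 r_pos by (auto elim!: eventually_mono dest: Fdd_b[of _ w v] simp: mult_ac)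
  qed
qed

end

context core begin

lemma psi1_bl: "bounded_linear (\<psi>1 x)"
  using psi_d has_derivative_bounded_linear by blast
lemma g1_bl: "bounded_linear (g1 x)"
  using g_d has_derivative_bounded_linear by blast

lemma Hd_bl: "bounded_linear (Hd p)"
  unfolding Hd_def by (intro bounded_linear_const_mult psi1_bl)

lemma Fd_bl: "bounded_linear (Fd p)"
  unfolding Fd_def by (intro bounded_linear_add bounded_linear_mult_const bounded_linear_const_mult Hd_bl g1_bl)

lemma Fdd_bil: "bilinear (Fdd p)"
proof -
  interpret a: linear "\<psi>1 p" using psi1_bl bounded_linear.linear by blast
  interpret b: linear "g1 p" using g1_bl bounded_linear.linear by blast
  have c1: "\<psi>2 p (x + y) z = \<psi>2 p x z + \<psi>2 p y z" "\<psi>2 p z (x + y) = \<psi>2 p z x + \<psi>2 p z y"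
     "\<psi>2 p (t *\<^sub>R x) z = t * \<psi>2 p x z" "\<psi>2 p z (t *\<^sub>R x) = t * \<psi>2 p z x" for x y z t
    using psi2_bl[of p] by (simp_all add: bilinear_ladd bilinear_radd bilinear_lmul bilinear_rmul)
  have c2: "g2 p (x + y) z = g2 p x z + g2 p y z" "g2 p z (x + y) = g2 p z x + g2 p z y"
     "g2 p (t *\<^sub>R x) z = t * g2 p x z" "g2 p z (t *\<^sub>R x) = t * g2 p z x" for x y z t
    using g2_bl[of p] by (simp_all add: bilinear_ladd bilinear_radd bilinear_lmul bilinear_rmul)
  show ?thesis unfolding bilinear_def linear_iff Fdd_def
    by (simp add: c1 c2 a.add a.scale b.add b.scale algebra_simps)
qed

lemma Fdd_bbl: "bounded_bilinear (Fdd p)"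
  using Fdd_bil bilinear_conv_bounded_bilinear by blast

definition "DF p = Blinfun (Fd p)"
definition "DDF p = Blinfun (\<lambda>w. Blinfun (Fdd p w))"

lemma DF_apply: "blinfun_apply (DF p) = Fd p"
  unfolding DF_def using Fd_bl bounded_linear_Blinfun_apply by blast

lemma Fdd_bl2: "bounded_linear (Fdd p w)"
  using Fdd_bbl bounded_bilinear.bounded_linear_right by blast

lemma DDF_bl: "bounded_linear (\<lambda>w. Blinfun (Fdd p w))"
proof -
  have "bounded_bilinear (\<lambda>i x. blinfun_apply (Blinfun (Fdd p i)) x) = bounded_linear (\<lambda>w. Blinfun (Fdd p w))"
    by (rule transfer_bounded_bilinear_bounded_linearI) simp
  moreover have "(\<lambda>i x. blinfun_apply (Blinfun (Fdd p i)) x) = Fdd p"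
    using bounded_linear_Blinfun_apply[OF Fdd_bl2] by (simp add: fun_eq_iff)
  ultimately show ?thesis using Fdd_bbl by simp
qed

lemma DDF_apply: "blinfun_apply (blinfun_apply (DDF p) w) v = Fdd p w v"
  unfolding DDF_def using bounded_linear_Blinfun_apply[OF DDF_bl] bounded_linear_Blinfun_apply[OF Fdd_bl2] by simp

lemma C1_H: "C1_on UNIV (\<lambda>p. h (\<psi> p))"
  unfolding C1_on_def
proof (intro exI[of _ "\<lambda>p. Blinfun (Hd p)"] conjI ballI)
  show "((\<lambda>p. h (\<psi> p)) has_derivative blinfun_apply (Blinfun (Hd x))) (at x)" for x
    using H_deriv bounded_linear_Blinfun_apply[OF Hd_bl] by simp
  show "continuous_on UNIV (\<lambda>p. Blinfun (Hd p))"
  proof (rule continuous_on_blinfun_componentwise)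
    fix e :: 'a
    have "(\<lambda>x. blinfun_apply (Blinfun (Hd x)) e) = (\<lambda>x. Hd x e)"
      using bounded_linear_Blinfun_apply[OF Hd_bl] by simp
    then show "continuous_on UNIV (\<lambda>x. blinfun_apply (Blinfun (Hd x)) e)"
      by (simp add: Hd_cont continuous_at_imp_continuous_on)
  qed
qed

lemma DF_deriv: "(DF has_derivative blinfun_apply (DDF p)) (at p)"
proof (rule hd_blinfun_comp)
  show "bounded_linear (blinfun_apply (DDF p))" by (rule blinfun.bounded_linear_right)
  fix e :: 'a
  show "((\<lambda>y. blinfun_apply (DF y) e) has_derivative (\<lambda>h. blinfun_apply (blinfun_apply (DDF p) h) e)) (at p)"
    unfolding DF_apply DDF_apply by (rule Fd_deriv)
qed

lemma C2_F: "C2_on UNIV (\<lambda>p. h (\<psi> p) * g p)"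
  unfolding C2_on_def
proof (intro exI[of _ DF] exI[of _ DDF] conjI ballI)
  show "((\<lambda>p. h (\<psi> p) * g p) has_derivative blinfun_apply (DF x)) (at x)" for x
    unfolding DF_apply by (rule F_deriv)
  show "(DF has_derivative blinfun_apply (DDF x)) (at x)" for x by (rule DF_deriv)
  show "continuous_on UNIV DDF"
  proof (rule continuous_on_blinfun_componentwise)
    fix e :: 'a
    show "continuous_on UNIV (\<lambda>x. blinfun_apply (DDF x) e)"
    proof (rule continuous_on_blinfun_componentwise)
      fix e' :: 'a
      show "continuous_on UNIV (\<lambda>x. blinfun_apply (blinfun_apply (DDF x) e) e')"
        unfolding DDF_apply using Fdd_cont continuous_at_imp_continuous_on by blast
    qed
  qed
qed

lemma main:
  "C1_on UNIV (\<lambda>p. h (\<psi> p))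
   \<and> (\<exists>c>0. \<forall>p. \<psi> p \<le> r \<longrightarrow> \<bar>h (\<psi> p)\<bar> \<le> c * \<psi> p)
   \<and> (\<exists>c>0. \<forall>p v. \<psi> p \<le> r \<longrightarrow>
         \<bar>frechet_derivative (\<lambda>q. h (\<psi> q)) (at p) v\<bar> \<le> c * sqrt (\<psi> p) * norm v)
   \<and> C2_on UNIV (\<lambda>p. h (\<psi> p) * g p)
   \<and> (\<exists>c>0. \<forall>p. \<psi> p \<le> r \<longrightarrow> \<bar>h (\<psi> p) * g p\<bar> \<le> c * \<psi> p powr (3/2))
   \<and> (\<exists>c>0. \<forall>p v. \<psi> p \<le> r \<longrightarrow>
         \<bar>frechet_derivative (\<lambda>p. h (\<psi> p) * g p) (at p) v\<bar> \<le> c * \<psi> p * norm v)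
   \<and> (\<exists>c>0. \<forall>p v w. \<psi> p \<le> r \<longrightarrow>
         \<bar>D2 (\<lambda>p. h (\<psi> p) * g p) p v w\<bar> \<le> c * sqrt (\<psi> p) * norm v * norm w)"
proof (intro conjI)
  show "C1_on UNIV (\<lambda>p. h (\<psi> p))" by (rule C1_H)
  show "C2_on UNIV (\<lambda>p. h (\<psi> p) * g p)" by (rule C2_F)
  show "\<exists>c>0. \<forall>p. \<psi> p \<le> r \<longrightarrow> \<bar>h (\<psi> p)\<bar> \<le> c * \<psi> p"
    using c_pos hpsi_b by blast
  have fH: "frechet_derivative (\<lambda>q. h (\<psi> q)) (at p) = Hd p" for p
    using frechet_derivative_at[OF H_deriv] by simp
  show "\<exists>c>0. \<forall>p v. \<psi> p \<le> r \<longrightarrow> \<bar>frechet_derivative (\<lambda>q. h (\<psi> q)) (at p) v\<bar> \<le> c * sqrt (\<psi> p) * norm v"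
    using c_pos Hd_b unfolding fH by (intro exI[of _ "c^2"]) auto
  show "\<exists>c>0. \<forall>p. \<psi> p \<le> r \<longrightarrow> \<bar>h (\<psi> p) * g p\<bar> \<le> c * \<psi> p powr (3/2)"
  proof (intro exI[of _ "c^2"] conjI allI impI)
    show "c^2 > 0" using c_pos by simp
    fix p assume a: "\<psi> p \<le> r"
    have "\<bar>h (\<psi> p) * g p\<bar> \<le> (c * \<psi> p) * (c * sqrt (\<psi> p))"
      by (rule abs_mult_le[OF hpsi_b[OF a] gb[OF a]])
    also have "\<dots> = c^2 * (\<psi> p * sqrt (\<psi> p))" by (simp add: power2_eq_square mult_ac)
    also have "\<psi> p * sqrt (\<psi> p) = \<psi> p powr (3/2)"
    proof (cases "\<psi> p = 0")
      case False
      then have pos: "\<psi> p > 0" using psi_nn[of p] by simp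
      have "\<psi> p powr (3/2) = \<psi> p powr (1 + 1/2)" by simp
      also have "\<dots> = \<psi> p powr 1 * \<psi> p powr (1/2)" by (rule powr_add)
      also have "\<dots> = \<psi> p * sqrt (\<psi> p)" using pos by (simp add: powr_half_sqrt)
      finally show ?thesis by simp
    qed simp
    finally show "\<bar>h (\<psi> p) * g p\<bar> \<le> c^2 * \<psi> p powr (3/2)" .
  qed
  have fF: "frechet_derivative (\<lambda>q. h (\<psi> q) * g q) (at p) = Fd p" for p
    using frechet_derivative_at[OF F_deriv] by simp
  show "\<exists>c>0. \<forall>p v. \<psi> p \<le> r \<longrightarrow> \<bar>frechet_derivative (\<lambda>p. h (\<psi> p) * g p) (at p) v\<bar> \<le> c * \<psi> p * norm v"
    using c_pos Fd_b unfolding fF by (intro exI[of _ "c^3 + c^2"]) (auto simp: add_pos_pos)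
  have fFF: "D2 (\<lambda>p. h (\<psi> p) * g p) p v w = Fdd p w v" for p v w
  proof -
    have "(\<lambda>q. frechet_derivative (\<lambda>p. h (\<psi> p) * g p) (at q) v) = (\<lambda>q. Fd q v)"
      unfolding fF ..
    then show ?thesis unfolding D2_def using frechet_derivative_at[OF Fd_deriv[of v p]] by metis
  qed
  show "\<exists>c>0. \<forall>p v w. \<psi> p \<le> r \<longrightarrow> \<bar>D2 (\<lambda>p. h (\<psi> p) * g p) p v w\<bar> \<le> c * sqrt (\<psi> p) * norm v * norm w"
  proof (intro exI[of _ "c^4 + 3*c^3 + c^2 * sqrt r"] conjI allI impI)
    show "c^4 + 3*c^3 + c^2 * sqrt r > 0" using c_pos r_pos by (simp add: add_pos_nonneg)
    fix p v w assume a: "\<psi> p \<le> r"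
    show "\<bar>D2 (\<lambda>p. h (\<psi> p) * g p) p v w\<bar> \<le> (c^4 + 3*c^3 + c^2 * sqrt r) * sqrt (\<psi> p) * norm v * norm w"
      unfolding fFF using Fdd_b[OF a, of w v] by (simp add: mult_ac)
  qed
qed

end

lemma cont_bound: "continuous_on {a..b} (f::real\<Rightarrow>real) \<Longrightarrow> \<exists>B. \<forall>y\<in>{a..b}. \<bar>f y\<bar> \<le> B"
proof -
  assume "continuous_on {a..b} f"
  then have "bounded (f ` {a..b})" by (intro compact_imp_bounded compact_continuous_image compact_Icc)
  then obtain B where "\<forall>x\<in>f ` {a..b}. norm x \<le> B" unfolding bounded_iff by blast
  then show ?thesis by auto
qed

lemma blinfun_real_apply: "blinfun_apply (F :: real \<Rightarrow>\<^sub>L 'b::real_normed_vector) t = t *\<^sub>R F 1"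
  using blinfun.scaleR_right[of F t 1] by simp

lemma h_facts:
  fixes h :: "real \<Rightarrow> real"
  assumes h0: "\<forall>y\<le>0. h y = 0" and hM: "\<exists>M. \<forall>y>0. \<bar>h y\<bar> \<le> M" and hC2: "C2_on {0<..} h"
    and hiii: "\<exists>c \<delta>. \<delta> > 0 \<and> (\<forall>y. 0 < y \<and> y < \<delta> \<longrightarrow> \<bar>h y / y\<bar> \<le> c)"
    and hiv: "\<exists>c \<delta>. \<delta> > 0 \<and> (\<forall>y. 0 < y \<and> y < \<delta> \<longrightarrow> \<bar>deriv h y\<bar> \<le> c)"
    and hv: "\<exists>c \<delta>. \<delta> > 0 \<and> (\<forall>y. 0 < y \<and> y < \<delta> \<longrightarrow> \<bar>deriv (deriv h) y * y\<bar> \<le> c)"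
    and r: "r > 0"
  shows "\<exists>h1 h2 c. (\<forall>y>0. (h has_real_derivative h1 y) (at y)) \<and> (\<forall>y>0. (h1 has_real_derivative h2 y) (at y))
     \<and> continuous_on {0<..} h2 \<and> c > 0 \<and> (\<forall>y. 0 < y \<and> y \<le> r \<longrightarrow> \<bar>h y\<bar> \<le> c * y \<and> \<bar>h1 y\<bar> \<le> c \<and> \<bar>h2 y * y\<bar> \<le> c)"
proof -
  obtain f' f'' where f'a: "\<forall>x\<in>{0<..}. (h has_derivative blinfun_apply (f' x)) (at x)"
    and f''a: "\<forall>x\<in>{0<..}. (f' has_derivative blinfun_apply (f'' x)) (at x)"
    and f''c: "continuous_on {0<..} f''"
    using hC2 unfolding C2_on_def by (elim exE conjE)
  have f': "(h has_derivative blinfun_apply (f' x)) (at x)" if "x \<in> {0<..}" for x using f'a that by simp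
  have f'': "(f' has_derivative blinfun_apply (f'' x)) (at x)" if "x \<in> {0<..}" for x using f''a that by simp
  define h1 where "h1 y = blinfun_apply (f' y) 1" for y
  define h2 where "h2 y = blinfun_apply (blinfun_apply (f'' y) 1) 1" for y
  have d1: "(h has_real_derivative h1 y) (at y)" if "y > 0" for y
  proof -
    have "blinfun_apply (f' y) t = h1 y * t" for t
      using blinfun_real_apply[of "f' y" t] by (simp add: h1_def)
    then have "blinfun_apply (f' y) = (*) (h1 y)" by (simp add: fun_eq_iff)
    then show ?thesis using f'[of y] that unfolding has_field_derivative_def by simp
  qed
  have d2: "(h1 has_real_derivative h2 y) (at y)" if "y > 0" for y
  proof -
    have "((\<lambda>x. blinfun_apply (f' x) 1) has_derivative (\<lambda>t. blinfun_apply (blinfun_apply (f'' y) t) 1)) (at y)"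
      using bounded_linear.has_derivative[OF blinfun.bounded_linear_left f''[of y]] that by simp
    moreover have "blinfun_apply (blinfun_apply (f'' y) t) 1 = h2 y * t" for t
      using blinfun_real_apply[of "f'' y" t] by (simp add: h2_def blinfun.scaleR_left)
    then have "(\<lambda>t. blinfun_apply (blinfun_apply (f'' y) t) 1) = (*) (h2 y)" by (simp add: fun_eq_iff)
    ultimately show ?thesis unfolding has_field_derivative_def h1_def[abs_def] by simp
  qed
  have c2: "continuous_on {0<..} h2"
    unfolding h2_def[abs_def]
    by (rule blinfun.continuous_on[OF blinfun.continuous_on[OF f''c continuous_on_const] continuous_on_const])
  have dh: "deriv h y = h1 y" if "y > 0" for y using d1[OF that] DERIV_imp_deriv by blast
  have ddh: "deriv (deriv h) y = h2 y" if "y > 0" for y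
  proof -
    have "(deriv h has_real_derivative h2 y) (at y)"
      by (rule has_field_derivative_transform_within_open[OF d2[OF that], of "{0<..}"]) (use that dh in auto)
    then show ?thesis using DERIV_imp_deriv by blast
  qed
  have h1c: "continuous_on {a..b} h1" if "a > 0" for a b
  proof (intro continuous_at_imp_continuous_on ballI)
    fix x assume "x \<in> {a..b}"
    then have "x > 0" using that by auto
    then show "isCont h1 x" using d2 DERIV_isCont by blast
  qed
  have h2c': "continuous_on {a..b} h2" if "a > 0" for a b
    using that by (intro continuous_on_subset[OF c2]) auto
  obtain M where M: "\<And>y. y > 0 \<Longrightarrow> \<bar>h y\<bar> \<le> M" using hM by blast
  obtain c0 \<delta>0 where \<delta>0: "\<delta>0 > 0" and c0: "\<And>y. 0 < y \<Longrightarrow> y < \<delta>0 \<Longrightarrow> \<bar>h y / y\<bar> \<le> c0" using hiii by blast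
  obtain c1 \<delta>1 where \<delta>1: "\<delta>1 > 0" and c1: "\<And>y. 0 < y \<Longrightarrow> y < \<delta>1 \<Longrightarrow> \<bar>deriv h y\<bar> \<le> c1" using hiv by blast
  obtain c2 \<delta>2 where \<delta>2: "\<delta>2 > 0" and c2': "\<And>y. 0 < y \<Longrightarrow> y < \<delta>2 \<Longrightarrow> \<bar>deriv (deriv h) y * y\<bar> \<le> c2" using hv by blast
  obtain B1 where B1: "\<And>y. y \<in> {\<delta>1..r} \<Longrightarrow> \<bar>h1 y\<bar> \<le> B1" using cont_bound[OF h1c[OF \<delta>1]] by blast
  obtain B2 where B2: "\<And>y. y \<in> {\<delta>2..r} \<Longrightarrow> \<bar>h2 y\<bar> \<le> B2" using cont_bound[OF h2c'[OF \<delta>2]] by blast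
  define C where "C = \<bar>c0\<bar> + \<bar>M\<bar> / \<delta>0 + \<bar>c1\<bar> + \<bar>B1\<bar> + \<bar>c2\<bar> + \<bar>B2\<bar> * r + 1"
  have Cnn: "\<bar>c0\<bar> + \<bar>M\<bar> / \<delta>0 \<le> C" "\<bar>c1\<bar> + \<bar>B1\<bar> \<le> C" "\<bar>c2\<bar> + \<bar>B2\<bar> * r \<le> C" "C > 0"
  proof -
    have "\<bar>M\<bar> / \<delta>0 \<ge> 0" "\<bar>B2\<bar> * r \<ge> 0" using \<delta>0 r by auto
    then show "\<bar>c0\<bar> + \<bar>M\<bar> / \<delta>0 \<le> C" "\<bar>c1\<bar> + \<bar>B1\<bar> \<le> C" "\<bar>c2\<bar> + \<bar>B2\<bar> * r \<le> C" "C > 0"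
      unfolding C_def by linarith+
  qed
  have bnd: "\<bar>h y\<bar> \<le> C * y \<and> \<bar>h1 y\<bar> \<le> C \<and> \<bar>h2 y * y\<bar> \<le> C" if y: "0 < y" "y \<le> r" for y
  proof (intro conjI)
    show "\<bar>h y\<bar> \<le> C * y"
    proof (cases "y < \<delta>0")
      case True
      have "\<bar>h y\<bar> = \<bar>h y / y\<bar> * y" using y by (simp add: abs_div)
      also have "\<dots> \<le> c0 * y" using c0[OF y(1) True] y by (intro mult_right_mono) auto
      also have "\<dots> \<le> C * y"
      proof (rule mult_right_mono)
        have "\<bar>M\<bar> / \<delta>0 \<ge> 0" using \<delta>0 by simp
        then show "c0 \<le> C" using Cnn(1) by linarith
      qed (use y in simp)
      finally show ?thesis .
    next
      case False
      have "\<bar>h y\<bar> \<le> \<bar>M\<bar>" using M[OF y(1)] by simp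
      also have "\<dots> = \<bar>M\<bar> / \<delta>0 * \<delta>0" using \<delta>0 by simp
      also have "\<dots> \<le> \<bar>M\<bar> / \<delta>0 * y" using False \<delta>0
        by (intro mult_left_mono) auto
      also have "\<dots> \<le> C * y" using Cnn(1) y by (intro mult_right_mono) auto
      finally show ?thesis .
    qed
    show "\<bar>h1 y\<bar> \<le> C"
    proof (cases "y < \<delta>1")
      case True then show ?thesis using c1[OF y(1) True] dh[OF y(1)] Cnn(2) by simp
    next
      case False then show ?thesis using B1[of y] y Cnn(2) by simp
    qed
    show "\<bar>h2 y * y\<bar> \<le> C"
    proof (cases "y < \<delta>2")
      case True
      have "\<bar>B2\<bar> * r \<ge> 0" using r by simp
      then show ?thesis using c2'[OF y(1) True] ddh[OF y(1)] Cnn(3) by simp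
    next
      case False
      have "\<bar>h2 y * y\<bar> = \<bar>h2 y\<bar> * y" using y by (simp add: abs_mult)
      also have "\<dots> \<le> \<bar>B2\<bar> * r" using B2[of y] y False by (intro mult_mono) auto
      finally show ?thesis using Cnn(3) by simp
    qed
  qed
  show ?thesis
    apply (rule exI[of _ h1], rule exI[of _ h2], rule exI[of _ C])
    using d1 d2 c2 Cnn(4) bnd by simp
qed


definition uu :: "'v::finite \<Rightarrow> 'v \<Rightarrow> real^'n^'v \<Rightarrow> real^'n" where "uu i j p = p$j - p$i"
definition ff :: "('v::finite set \<Rightarrow> real) \<Rightarrow> 'v \<Rightarrow> 'v \<Rightarrow> real^'n^'v \<Rightarrow> real" where
  "ff d i j p = uu i j p \<bullet> uu i j p - (d {i,j})^2"
definition JJ :: "'v set set \<Rightarrow> 'v \<Rightarrow> 'v set" where "JJ E i = {j. {i,j} \<in> E}"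
definition P1 :: "('v::finite set \<Rightarrow> real) \<Rightarrow> 'v set set \<Rightarrow> 'v \<Rightarrow> real^'n^'v \<Rightarrow> real^'n^'v \<Rightarrow> real" where
  "P1 d E i p v = (\<Sum>j\<in>JJ E i. ff d i j p * (uu i j p \<bullet> uu i j v))"
definition P2 :: "('v::finite set \<Rightarrow> real) \<Rightarrow> 'v set set \<Rightarrow> 'v \<Rightarrow> real^'n^'v \<Rightarrow> real^'n^'v \<Rightarrow> real^'n^'v \<Rightarrow> real" where
  "P2 d E i p w v = (\<Sum>j\<in>JJ E i. 2 * (uu i j p \<bullet> uu i j w) * (uu i j p \<bullet> uu i j v) + ff d i j p * (uu i j w \<bullet> uu i j v))"
definition gg :: "('v::finite set \<Rightarrow> real) \<Rightarrow> 'v set set \<Rightarrow> 'v \<Rightarrow> real^'n \<Rightarrow> real^'n^'v \<Rightarrow> real" where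
  "gg d E i bb p = - (\<Sum>j\<in>JJ E i. ff d i j p * (uu i j p \<bullet> bb))"
definition G1f :: "('v::finite set \<Rightarrow> real) \<Rightarrow> 'v set set \<Rightarrow> 'v \<Rightarrow> real^'n \<Rightarrow> real^'n^'v \<Rightarrow> real^'n^'v \<Rightarrow> real" where
  "G1f d E i bb p v = - (\<Sum>j\<in>JJ E i. 2 * (uu i j p \<bullet> uu i j v) * (uu i j p \<bullet> bb) + ff d i j p * (uu i j v \<bullet> bb))"
definition G2f :: "('v::finite set \<Rightarrow> real) \<Rightarrow> 'v set set \<Rightarrow> 'v \<Rightarrow> real^'n \<Rightarrow> real^'n^'v \<Rightarrow> real^'n^'v \<Rightarrow> real^'n^'v \<Rightarrow> real" where
  "G2f d E i bb p w v = - (\<Sum>j\<in>JJ E i. 2 * (uu i j w \<bullet> uu i j v) * (uu i j p \<bullet> bb)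
      + 2 * (uu i j p \<bullet> uu i j v) * (uu i j w \<bullet> bb) + 2 * (uu i j p \<bullet> uu i j w) * (uu i j v \<bullet> bb))"

lemma psi_i_eq: "psi_i d E i p = 1/4 * (\<Sum>j\<in>JJ E i. (ff d i j p)^2)"
  by (simp add: psi_i_def ff_def uu_def JJ_def power2_norm_eq_inner)

lemma psi_i_fun: "psi_i d E i = (\<lambda>p. 1/4 * (\<Sum>j\<in>JJ E i. (ff d i j p)^2))"
  by (rule ext) (rule psi_i_eq)

lemma uu_bl: "bounded_linear (uu i j)"
  unfolding uu_def[abs_def] by (intro bounded_linear_sub bounded_linear_vec_nth)

lemma uu_d: "(uu i j has_derivative uu i j) F"
  by (rule bounded_linear_imp_has_derivative[OF uu_bl])

lemma uu_add: "uu i j (x + y) = uu i j x + uu i j y" and uu_scale: "uu i j (t *\<^sub>R x) = t *\<^sub>R uu i j x"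
  by (simp_all add: uu_def algebra_simps)

lemma uu_cont: "continuous_on S (uu i j)"
  by (rule linear_continuous_on[OF uu_bl])

lemma ff_d: "((\<lambda>p. ff d i j p) has_derivative (\<lambda>v. 2 * (uu i j p \<bullet> uu i j v))) (at p)"
proof -
  have e: "(\<lambda>p. ff d i j p) = (\<lambda>p. uu i j p \<bullet> uu i j p - (d {i,j})^2)" by (simp add: ff_def fun_eq_iff)
  note D = has_derivative_diff[OF has_derivative_inner[OF uu_d uu_d] has_derivative_const]
  show ?thesis unfolding e by (rule has_derivative_eq_rhs[OF D]) (simp add: fun_eq_iff inner_commute)
qed

lemma ff2_d: "((\<lambda>p. (ff d i j p)^2) has_derivative (\<lambda>v. 4 * (ff d i j p * (uu i j p \<bullet> uu i j v)))) (at p)"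
  by (rule has_derivative_eq_rhs[OF has_derivative_power[OF ff_d]]) (simp add: fun_eq_iff)

lemma psi_d: "(psi_i d E i has_derivative P1 d E i p) (at p)"
  unfolding psi_i_fun
  apply (rule has_derivative_eq_rhs)
   apply (rule has_derivative_mult_right)
   apply (rule has_derivative_sum)
   apply (rule ff2_d)
  apply (simp add: fun_eq_iff P1_def sum_distrib_left)
  done

lemma P1_d: "((\<lambda>y. P1 d E i y v) has_derivative (\<lambda>w. P2 d E i p w v)) (at p)"
  unfolding P1_def
  apply (rule has_derivative_eq_rhs)
   apply (rule has_derivative_sum)
   apply (rule has_derivative_mult[OF ff_d has_derivative_inner[OF uu_d has_derivative_const]])
  apply (simp add: fun_eq_iff P2_def algebra_simps inner_commute)
  done

lemma gg_d: "(gg d E i bb has_derivative G1f d E i bb p) (at p)"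
  unfolding gg_def[abs_def]
  apply (rule has_derivative_eq_rhs)
   apply (rule has_derivative_minus)
   apply (rule has_derivative_sum)
   apply (rule has_derivative_mult[OF ff_d has_derivative_inner[OF uu_d has_derivative_const]])
  apply (simp add: fun_eq_iff G1f_def algebra_simps inner_commute)
  done

lemma G1_d: "((\<lambda>y. G1f d E i bb y v) has_derivative (\<lambda>w. G2f d E i bb p w v)) (at p)"
proof -
  note A = has_derivative_mult[OF has_derivative_mult_right[OF has_derivative_inner[OF uu_d has_derivative_const]] has_derivative_inner[OF uu_d has_derivative_const]]
  note B = has_derivative_mult[OF ff_d has_derivative_const]
  show ?thesis
  unfolding G1f_def
  apply (rule has_derivative_eq_rhs)
   apply (rule has_derivative_minus)
   apply (rule has_derivative_sum)
   apply (rule has_derivative_add[OF A B])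
  apply (simp add: fun_eq_iff G2f_def algebra_simps inner_commute sum.distrib)
  done
qed

lemma P2_c: "continuous_on UNIV (\<lambda>x. P2 d E i x w v)"
  unfolding P2_def ff_def by (intro continuous_intros uu_cont)

lemma G2_c: "continuous_on UNIV (\<lambda>x. G2f d E i bb x w v)"
  unfolding G2f_def by (intro continuous_intros uu_cont)

lemma P2_bl: "bilinear (P2 d E i p)"
  unfolding bilinear_def linear_iff P2_def
  by (simp add: uu_add uu_scale inner_add_left inner_add_right sum.distrib sum_distrib_left algebra_simps)

lemma G2_bl: "bilinear (G2f d E i bb p)"
  unfolding bilinear_def linear_iff G2f_def
  by (simp add: uu_add uu_scale inner_add_left inner_add_right sum.distrib sum_distrib_left algebra_simps)


lemma inner_le: "norm a \<le> A \<Longrightarrow> norm b \<le> B \<Longrightarrow> \<bar>a \<bullet> b\<bar> \<le> A * B"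
  by (rule order_trans[OF Cauchy_Schwarz_ineq2]) (simp add: mult_mono')

lemma sum_bound: "finite A \<Longrightarrow> (\<And>j. j \<in> A \<Longrightarrow> \<bar>f j\<bar> \<le> a * X) \<Longrightarrow> \<bar>\<Sum>j\<in>A. f j\<bar> \<le> real (card A) * a * (X::real)"
proof -
  assume fin: "finite A" and b: "\<And>j. j \<in> A \<Longrightarrow> \<bar>f j\<bar> \<le> a * X"
  have "\<bar>\<Sum>j\<in>A. f j\<bar> \<le> (\<Sum>j\<in>A. \<bar>f j\<bar>)" by (rule sum_abs)
  also have "\<dots> \<le> (\<Sum>j\<in>A. a * X)" by (rule sum_mono[OF b])
  also have "\<dots> = real (card A) * a * X" by simp
  finally show ?thesis .
qed

lemma finite_JJ: "finite (JJ E (i::'v::finite))" by simp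

lemma ff_sq_le: "j \<in> JJ E i \<Longrightarrow> (ff d i j p)^2 \<le> 4 * psi_i d E i p"
proof -
  assume j: "j \<in> JJ E i"
  have "(ff d i j p)^2 \<le> (\<Sum>j\<in>JJ E i. (ff d i j p)^2)"
    by (rule member_le_sum[OF j]) auto
  then show ?thesis by (simp add: psi_i_eq)
qed

lemma psi_i_nn: "psi_i d E i p \<ge> 0"
  unfolding psi_i_eq by (simp add: sum_nonneg)

lemma ff_le: "j \<in> JJ E i \<Longrightarrow> \<bar>ff d i j p\<bar> \<le> 2 * sqrt (psi_i d E i p)"
proof -
  assume j: "j \<in> JJ E i"
  have "\<bar>ff d i j p\<bar> \<le> sqrt (4 * psi_i d E i p)"
    by (rule real_le_rsqrt) (simp add: ff_sq_le[OF j])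
  also have "\<dots> = 2 * sqrt (psi_i d E i p)" by (simp add: real_sqrt_mult)
  finally show ?thesis .
qed

lemma uu_v: "norm (uu i j v) \<le> 2 * norm v"
proof -
  have "norm (uu i j v) \<le> norm (v$j) + norm (v$i)" unfolding uu_def by (rule norm_triangle_ineq4)
  also have "\<dots> \<le> 2 * norm v" using Finite_Cartesian_Product.norm_nth_le[of v j] Finite_Cartesian_Product.norm_nth_le[of v i] by simp
  finally show ?thesis .
qed

definition "Msum d E i r = 2 * sqrt r + (\<Sum>j\<in>JJ E i. (d {i,j})^2)"

lemma Msum_nn: "r \<ge> 0 \<Longrightarrow> Msum d E i r \<ge> 0"
  unfolding Msum_def by (simp add: sum_nonneg)

lemma uu_p: assumes a: "psi_i d E i p \<le> r" and j: "j \<in> JJ E i"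
  shows "norm (uu i j p) \<le> sqrt (Msum d E i r)"
proof (rule real_le_rsqrt)
  have "(norm (uu i j p))^2 = ff d i j p + (d {i,j})^2" by (simp add: ff_def power2_norm_eq_inner)
  also have "\<dots> \<le> 2 * sqrt r + (\<Sum>j\<in>JJ E i. (d {i,j})^2)"
  proof (rule add_mono)
    have "ff d i j p \<le> 2 * sqrt (psi_i d E i p)" using ff_le[OF j, of d p] by simp
    also have "\<dots> \<le> 2 * sqrt r" using a by simp
    finally show "ff d i j p \<le> 2 * sqrt r" .
    show "(d {i,j})^2 \<le> (\<Sum>j\<in>JJ E i. (d {i,j})^2)" by (rule member_le_sum[OF j]) auto
  qed
  finally show "(norm (uu i j p))^2 \<le> Msum d E i r" by (simp add: Msum_def)
qed


lemma abs2_le: "\<bar>a\<bar> \<le> A \<Longrightarrow> \<bar>b\<bar> \<le> B \<Longrightarrow> \<bar>2 * a * b\<bar> \<le> 2 * A * (B::real)"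
proof -
  assume "\<bar>a\<bar> \<le> A" "\<bar>b\<bar> \<le> B"
  then have "\<bar>a * b\<bar> \<le> A * B" by (rule abs_mult_le)
  then show ?thesis by (simp add: abs_mult mult.assoc)
qed

definition "KK d E i r = real (card (JJ E i)) * (8 * Msum d E i r + 8 * sqrt r + 24 * sqrt (Msum d E i r)) + 1"

locale conc =
  fixes d :: "'v::finite set \<Rightarrow> real" and E :: "'v set set" and i :: 'v and bb :: "real^'n::finite" and r :: real
  assumes r_pos: "r > 0" and bb1: "norm bb = 1"
begin

abbreviation "M \<equiv> Msum d E i r"
abbreviation "U \<equiv> sqrt (Msum d E i r)"
abbreviation "K \<equiv> KK d E i r"
abbreviation "CJ \<equiv> real (card (JJ E i))"

lemma M0: "M \<ge> 0" by (rule Msum_nn) (use r_pos in simp)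
lemma U0: "U \<ge> 0" using M0 by simp
lemma UU: "U * U = M" using M0 by simp
lemma sr0: "sqrt r \<ge> 0" using r_pos by simp
lemma CJ0: "CJ \<ge> 0" by simp
lemma K_ge: "CJ * a \<le> K" if "0 \<le> a" "a \<le> 8 * M + 8 * sqrt r + 24 * U"
proof -
  have "CJ * a \<le> CJ * (8 * M + 8 * sqrt r + 24 * U)" by (rule mult_left_mono[OF that(2) CJ0])
  then show ?thesis by (simp add: KK_def)
qed
lemma K_pos: "K > 0"
proof -
  have "CJ * (8 * M + 8 * sqrt r + 24 * U) \<ge> 0" using M0 U0 sr0 by simp
  then show ?thesis by (simp add: KK_def)
qed

lemma weaken: "\<bar>x\<bar> \<le> CJ * a * X \<Longrightarrow> 0 \<le> a \<Longrightarrow> a \<le> 8 * M + 8 * sqrt r + 24 * U \<Longrightarrow> X \<ge> 0 \<Longrightarrow> \<bar>x\<bar> \<le> K * X"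
  using mult_right_mono[OF K_ge[of a] ] by (meson order_trans)

context
  fixes p :: "real^'n^'v" assumes a: "psi_i d E i p \<le> r"
begin

abbreviation "s \<equiv> sqrt (psi_i d E i p)"
lemma s0: "s \<ge> 0" using psi_i_nn by simp
lemma sr: "s \<le> sqrt r" using a by simp
lemma upj: "j \<in> JJ E i \<Longrightarrow> norm (uu i j p) \<le> U" using uu_p[OF a] by simp
lemma ffj: "j \<in> JJ E i \<Longrightarrow> \<bar>ff d i j p\<bar> \<le> 2 * s" using ff_le[of j E i d p] by simp
lemma ffr: "j \<in> JJ E i \<Longrightarrow> \<bar>ff d i j p\<bar> \<le> 2 * sqrt r" using ffj[of j] sr by linarith
lemma bbn: "norm bb \<le> 1" using bb1 by simp

lemma P1_b: "\<bar>P1 d E i p v\<bar> \<le> K * s * norm v"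
proof -
  have "\<bar>P1 d E i p v\<bar> \<le> CJ * (4 * U) * (s * norm v)"
    unfolding P1_def
  proof (rule sum_bound[OF finite_JJ])
    fix j assume j: "j \<in> JJ E i"
    have "\<bar>ff d i j p * (uu i j p \<bullet> uu i j v)\<bar> \<le> (2 * s) * (U * (2 * norm v))"
      by (rule abs_mult_le[OF ffj[OF j] inner_le[OF upj[OF j] uu_v]])
    then show "\<bar>ff d i j p * (uu i j p \<bullet> uu i j v)\<bar> \<le> 4 * U * (s * norm v)" by (simp add: mult_ac)
  qed
  then have "\<bar>P1 d E i p v\<bar> \<le> K * (s * norm v)"
    by (rule weaken) (use U0 M0 sr0 s0 in auto)
  then show ?thesis by (simp add: mult_ac)
qed

lemma P2_b: "\<bar>P2 d E i p w v\<bar> \<le> K * norm w * norm v"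
proof -
  have "\<bar>P2 d E i p w v\<bar> \<le> CJ * (8 * M + 8 * sqrt r) * (norm w * norm v)"
    unfolding P2_def
  proof (rule sum_bound[OF finite_JJ])
    fix j assume j: "j \<in> JJ E i"
    have 1: "\<bar>2 * (uu i j p \<bullet> uu i j w) * (uu i j p \<bullet> uu i j v)\<bar> \<le> 2 * (U * (2 * norm w)) * (U * (2 * norm v))"
      by (rule abs2_le[OF inner_le[OF upj[OF j] uu_v] inner_le[OF upj[OF j] uu_v]])
    have 2: "\<bar>ff d i j p * (uu i j w \<bullet> uu i j v)\<bar> \<le> (2 * sqrt r) * ((2 * norm w) * (2 * norm v))"
      by (rule abs_mult_le[OF ffr[OF j] inner_le[OF uu_v uu_v]])
    have e1: "2 * (U * (2 * norm w)) * (U * (2 * norm v)) = 8 * (U * U) * (norm w * norm v)" by (simp add: mult_ac)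
    have e2: "(2 * sqrt r) * ((2 * norm w) * (2 * norm v)) = 8 * sqrt r * (norm w * norm v)" by (simp add: mult_ac)
    show "\<bar>2 * (uu i j p \<bullet> uu i j w) * (uu i j p \<bullet> uu i j v) + ff d i j p * (uu i j w \<bullet> uu i j v)\<bar>
        \<le> (8 * M + 8 * sqrt r) * (norm w * norm v)"
      using 1[unfolded e1 UU] 2[unfolded e2] abs_triangle_ineq[of "2 * (uu i j p \<bullet> uu i j w) * (uu i j p \<bullet> uu i j v)" "ff d i j p * (uu i j w \<bullet> uu i j v)"]
        distrib_right[of "8 * M" "8 * sqrt r" "norm w * norm v"]
      by linarith
  qed
  then have "\<bar>P2 d E i p w v\<bar> \<le> K * (norm w * norm v)"
    by (rule weaken) (use U0 M0 sr0 in auto)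
  then show ?thesis by (simp add: mult_ac)
qed

lemma gg_b: "\<bar>gg d E i bb p\<bar> \<le> K * s"
proof -
  have "\<bar>\<Sum>j\<in>JJ E i. ff d i j p * (uu i j p \<bullet> bb)\<bar> \<le> CJ * (2 * U) * s"
  proof (rule sum_bound[OF finite_JJ])
    fix j assume j: "j \<in> JJ E i"
    have "\<bar>ff d i j p * (uu i j p \<bullet> bb)\<bar> \<le> (2 * s) * (U * 1)"
      by (rule abs_mult_le[OF ffj[OF j] inner_le[OF upj[OF j] bbn]])
    then show "\<bar>ff d i j p * (uu i j p \<bullet> bb)\<bar> \<le> 2 * U * s" by (simp add: mult_ac)
  qed
  then have "\<bar>\<Sum>j\<in>JJ E i. ff d i j p * (uu i j p \<bullet> bb)\<bar> \<le> K * s"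
    by (rule weaken) (use U0 M0 sr0 s0 in auto)
  then show ?thesis by (simp add: gg_def)
qed

lemma G1_b: "\<bar>G1f d E i bb p v\<bar> \<le> K * norm v"
proof -
  have "\<bar>\<Sum>j\<in>JJ E i. 2 * (uu i j p \<bullet> uu i j v) * (uu i j p \<bullet> bb) + ff d i j p * (uu i j v \<bullet> bb)\<bar> \<le> CJ * (4 * M + 4 * sqrt r) * norm v"
  proof (rule sum_bound[OF finite_JJ])
    fix j assume j: "j \<in> JJ E i"
    have 1: "\<bar>2 * (uu i j p \<bullet> uu i j v) * (uu i j p \<bullet> bb)\<bar> \<le> 2 * (U * (2 * norm v)) * (U * 1)"
      by (rule abs2_le[OF inner_le[OF upj[OF j] uu_v] inner_le[OF upj[OF j] bbn]])
    have 2: "\<bar>ff d i j p * (uu i j v \<bullet> bb)\<bar> \<le> (2 * sqrt r) * ((2 * norm v) * 1)"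
      by (rule abs_mult_le[OF ffr[OF j] inner_le[OF uu_v bbn]])
    have e1: "2 * (U * (2 * norm v)) * (U * 1) = 4 * (U * U) * norm v" by (simp add: mult_ac)
    have e2: "(2 * sqrt r) * ((2 * norm v) * 1) = 4 * sqrt r * norm v" by (simp add: mult_ac)
    show "\<bar>2 * (uu i j p \<bullet> uu i j v) * (uu i j p \<bullet> bb) + ff d i j p * (uu i j v \<bullet> bb)\<bar> \<le> (4 * M + 4 * sqrt r) * norm v"
      using 1[unfolded e1 UU] 2[unfolded e2] abs_triangle_ineq[of "2 * (uu i j p \<bullet> uu i j v) * (uu i j p \<bullet> bb)" "ff d i j p * (uu i j v \<bullet> bb)"]
        distrib_right[of "4 * M" "4 * sqrt r" "norm v"]
      by linarith
  qed
  then have "\<bar>\<Sum>j\<in>JJ E i. 2 * (uu i j p \<bullet> uu i j v) * (uu i j p \<bullet> bb) + ff d i j p * (uu i j v \<bullet> bb)\<bar> \<le> K * norm v"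
    by (rule weaken) (use U0 M0 sr0 in auto)
  then show ?thesis by (simp add: G1f_def)
qed

lemma G2_b: "\<bar>G2f d E i bb p w v\<bar> \<le> K * norm w * norm v"
proof -
  have "\<bar>\<Sum>j\<in>JJ E i. 2 * (uu i j w \<bullet> uu i j v) * (uu i j p \<bullet> bb)
      + 2 * (uu i j p \<bullet> uu i j v) * (uu i j w \<bullet> bb) + 2 * (uu i j p \<bullet> uu i j w) * (uu i j v \<bullet> bb)\<bar>
     \<le> CJ * (24 * U) * (norm w * norm v)"
  proof (rule sum_bound[OF finite_JJ])
    fix j assume j: "j \<in> JJ E i"
    have 1: "\<bar>2 * (uu i j w \<bullet> uu i j v) * (uu i j p \<bullet> bb)\<bar> \<le> 2 * ((2 * norm w) * (2 * norm v)) * (U * 1)"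
      by (rule abs2_le[OF inner_le[OF uu_v uu_v] inner_le[OF upj[OF j] bbn]])
    have 2: "\<bar>2 * (uu i j p \<bullet> uu i j v) * (uu i j w \<bullet> bb)\<bar> \<le> 2 * (U * (2 * norm v)) * ((2 * norm w) * 1)"
      by (rule abs2_le[OF inner_le[OF upj[OF j] uu_v] inner_le[OF uu_v bbn]])
    have 3: "\<bar>2 * (uu i j p \<bullet> uu i j w) * (uu i j v \<bullet> bb)\<bar> \<le> 2 * (U * (2 * norm w)) * ((2 * norm v) * 1)"
      by (rule abs2_le[OF inner_le[OF upj[OF j] uu_v] inner_le[OF uu_v bbn]])
    have e: "2 * ((2 * norm w) * (2 * norm v)) * (U * 1) = 8 * U * (norm w * norm v)"
      "2 * (U * (2 * norm v)) * ((2 * norm w) * 1) = 8 * U * (norm w * norm v)"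
      "2 * (U * (2 * norm w)) * ((2 * norm v) * 1) = 8 * U * (norm w * norm v)"
      by (simp_all add: mult_ac)
    show "\<bar>2 * (uu i j w \<bullet> uu i j v) * (uu i j p \<bullet> bb)
      + 2 * (uu i j p \<bullet> uu i j v) * (uu i j w \<bullet> bb) + 2 * (uu i j p \<bullet> uu i j w) * (uu i j v \<bullet> bb)\<bar>
      \<le> 24 * U * (norm w * norm v)"
      using 1 2 3 e
        abs_triangle_ineq[of "2 * (uu i j w \<bullet> uu i j v) * (uu i j p \<bullet> bb) + 2 * (uu i j p \<bullet> uu i j v) * (uu i j w \<bullet> bb)" "2 * (uu i j p \<bullet> uu i j w) * (uu i j v \<bullet> bb)"]
        abs_triangle_ineq[of "2 * (uu i j w \<bullet> uu i j v) * (uu i j p \<bullet> bb)" "2 * (uu i j p \<bullet> uu i j v) * (uu i j w \<bullet> bb)"]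
      by linarith
  qed
  then have "\<bar>\<Sum>j\<in>JJ E i. 2 * (uu i j w \<bullet> uu i j v) * (uu i j p \<bullet> bb)
      + 2 * (uu i j p \<bullet> uu i j v) * (uu i j w \<bullet> bb) + 2 * (uu i j p \<bullet> uu i j w) * (uu i j v \<bullet> bb)\<bar>
     \<le> K * (norm w * norm v)"
    by (rule weaken) (use U0 M0 sr0 in auto)
  then show ?thesis by (simp add: G2f_def mult_ac)
qed

end
end


lemma edge_term_eq:
  assumes "a \<noteq> c"
  shows "edge_term d p {a,c} = ((norm (p$c - p$a))^2 - (d {a,c})^2)^2"
  unfolding edge_term_def
proof (rule the_equality)
  show "\<exists>i j. {a, c} = {i, j} \<and> i \<noteq> j \<and> ((norm (p$c - p$a))^2 - (d {a,c})^2)^2 = ((norm (p $ j - p $ i))^2 - (d {a, c})^2)^2"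
    by (intro exI[of _ a] exI[of _ c]) (use assms in simp)
  fix t assume "\<exists>i j. {a, c} = {i, j} \<and> i \<noteq> j \<and> t = ((norm (p $ j - p $ i))^2 - (d {a, c})^2)^2"
  then obtain i j where ij: "{a, c} = {i, j}" "t = ((norm (p $ j - p $ i))^2 - (d {a, c})^2)^2" by (elim exE conjE) simp
  from ij(1) have "(i = a \<and> j = c) \<or> (i = c \<and> j = a)" by (simp add: doubleton_eq_iff) blast
  then show "t = ((norm (p$c - p$a))^2 - (d {a,c})^2)^2"
  proof
    assume "i = c \<and> j = a"
    then show ?thesis using ij(2) norm_minus_commute[of "p$c" "p$a"] by simp
  qed (use ij(2) in simp)
qed

lemma edge_repr:
  assumes "card e = 2"
  obtains a c where "a \<noteq> c" "e = {a,c}"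
proof -
  from assms obtain x y where "e = {x,y}" "x \<noteq> y" unfolding card_2_iff by (elim exE conjE)
  then show ?thesis using that by simp
qed

lemma edge_term_d:
  fixes e :: "'v::finite set"
  assumes "card e = 2"
  shows "(\<lambda>p::real^'n::finite^'v. edge_term d p e) differentiable (at p)"
proof -
  obtain a c where ac: "a \<noteq> c" "e = {a,c}" using edge_repr[OF assms] by blast
  have f: "(\<lambda>p::real^'n^'v. edge_term d p e) = (\<lambda>p. (uu a c p \<bullet> uu a c p - (d e)^2)^2)"
    using ac(2) by (simp add: edge_term_eq[OF ac(1)] fun_eq_iff uu_def power2_norm_eq_inner)
  show ?thesis unfolding f
    by (rule differentiableI[OF has_derivative_power[OF has_derivative_diff[OF has_derivative_inner[OF uu_d uu_d] has_derivative_const]]])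
qed

lemma i_notin_JJ: "\<forall>e\<in>E. card e = 2 \<Longrightarrow> i \<notin> JJ E i"
  by (auto simp: JJ_def)

lemma psi_split:
  fixes E :: "'v::finite set set" and p :: "real^'n::finite^'v"
  assumes edges: "\<forall>e\<in>E. card e = 2"
  shows "psi d E p = psi_i d E i p + 1/4 * (\<Sum>e\<in>E - {e. i \<in> e}. edge_term d p e)"
proof -
  have fin: "finite E" by simp
  have img: "(\<lambda>j. {i,j}) ` JJ E i = E \<inter> {e. i \<in> e}"
  proof
    show "(\<lambda>j. {i,j}) ` JJ E i \<subseteq> E \<inter> {e. i \<in> e}" by (auto simp: JJ_def)
    show "E \<inter> {e. i \<in> e} \<subseteq> (\<lambda>j. {i,j}) ` JJ E i"
    proof
      fix e assume e: "e \<in> E \<inter> {e. i \<in> e}"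
      then obtain a c where ac: "a \<noteq> c" "e = {a,c}" using edge_repr edges by blast
      have "i = a \<or> i = c" using e ac by auto
      then have "\<exists>j. e = {i,j}" using ac by (metis insert_commute)
      then obtain j where "e = {i,j}" by blast
      then show "e \<in> (\<lambda>j. {i,j}) ` JJ E i" using e by (auto simp: JJ_def)
    qed
  qed
  have inj: "inj_on (\<lambda>j. {i,j}) (JJ E i)"
    unfolding inj_on_def by (metis doubleton_eq_iff)
  have "(\<Sum>e\<in>E \<inter> {e. i \<in> e}. edge_term d p e) = (\<Sum>j\<in>JJ E i. edge_term d p {i,j})"
    unfolding img[symmetric] by (rule sum.reindex[OF inj, unfolded comp_def])
  also have "\<dots> = (\<Sum>j\<in>JJ E i. ((norm (p$j - p$i))^2 - (d {i,j})^2)^2)"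
  proof (rule sum.cong[OF refl])
    fix j assume "j \<in> JJ E i"
    then have "i \<noteq> j" using i_notin_JJ[OF edges] by auto
    then show "edge_term d p {i,j} = ((norm (p$j - p$i))^2 - (d {i,j})^2)^2" by (rule edge_term_eq)
  qed
  finally have A: "(\<Sum>e\<in>E \<inter> {e. i \<in> e}. edge_term d p e) = 4 * psi_i d E i p"
    by (simp add: psi_i_def JJ_def)
  have S: "(\<Sum>e\<in>E. edge_term d p e) = (\<Sum>e\<in>E \<inter> {e. i \<in> e}. edge_term d p e) + (\<Sum>e\<in>E - {e. i \<in> e}. edge_term d p e)"
    by (rule sum.Int_Diff[OF fin])
  show ?thesis
    unfolding psi_def S A by (simp add: algebra_simps)
qed

definition "Rr d E i p = 1/4 * (\<Sum>e\<in>E - {e. i \<in> e}. edge_term d p e)"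

lemma Rr_diff:
  fixes E :: "'v::finite set set"
  assumes edges: "\<forall>e\<in>E. card e = 2"
  shows "(\<lambda>p::real^'n::finite^'v. Rr d E i p) differentiable (at p)"
  unfolding Rr_def
  apply (rule differentiable_mult[OF differentiable_const])
proof (rule differentiable_sum)
  show "finite (E - {e. i \<in> e})" by (rule finite_Diff) simp
  show "\<forall>a\<in>E - {e. i \<in> e}. (\<lambda>p::real^'n^'v. edge_term d p a) differentiable (at p)"
  proof
    fix a assume "a \<in> E - {e. i \<in> e}"
    then have "card a = 2" using edges by auto
    then show "(\<lambda>p::real^'n^'v. edge_term d p a) differentiable (at p)" by (rule edge_term_d)
  qed
qed

lemma Rr_const:
  fixes E :: "'v::finite set set" and p :: "real^'n::finite^'v"
  assumes edges: "\<forall>e\<in>E. card e = 2"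
  shows "Rr d E i (p + t *\<^sub>R Bfield b i k) = Rr d E i p"
  unfolding Rr_def
proof (rule arg_cong[where f="\<lambda>x. 1/4 * x"], rule sum.cong[OF refl])
  fix e assume e: "e \<in> E - {e. i \<in> e}"
  then obtain a c where ac: "a \<noteq> c" "e = {a,c}" using edge_repr edges by blast
  have "a \<noteq> i" "c \<noteq> i" using e ac by auto
  then show "edge_term d (p + t *\<^sub>R Bfield b i k) e = edge_term d p e"
    using ac by (simp add: edge_term_eq Bfield_def)
qed

lemma lie_eq:
  fixes E :: "'v::finite set set" and b :: "'v \<Rightarrow> 'n::finite \<Rightarrow> real^'n"
  assumes edges: "\<forall>e\<in>E. card e = 2"
  shows "lie (Xfield h d E b i k \<nu>) (psi d E) = (\<lambda>p. h \<nu> (psi_i d E i p) * gg d E i (b i k) p)"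
proof
  fix p :: "real^'n^'v"
  define B where "B = Bfield b i k"
  define DR where "DR = frechet_derivative (Rr d E i) (at p)"
  have DR: "(Rr d E i has_derivative DR) (at p)"
    unfolding DR_def by (rule frechet_derivative_works[THEN iffD1, OF Rr_diff[OF edges]])
  have pf: "psi d E = (\<lambda>q. psi_i d E i q + Rr d E i q)"
    unfolding Rr_def by (rule ext) (rule psi_split[OF edges])
  have fd: "frechet_derivative (psi d E) (at p) = (\<lambda>v. P1 d E i p v + DR v)"
    unfolding pf by (rule frechet_derivative_at[OF has_derivative_add[OF psi_d DR], symmetric])
  have DRB: "DR B = 0"
  proof -
    have c1: "((\<lambda>t::real. p + t *\<^sub>R B) has_derivative (\<lambda>x. 0 + x *\<^sub>R B)) (at 0)"
      by (rule has_derivative_add[OF has_derivative_const has_derivative_scaleR_left[OF has_derivative_ident]])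
    have c2: "((Rr d E i \<circ> (\<lambda>t::real. p + t *\<^sub>R B)) has_derivative (DR \<circ> (\<lambda>x. 0 + x *\<^sub>R B))) (at 0)"
      by (rule diff_chain_at[OF c1]) (simp add: DR)
    have "(Rr d E i \<circ> (\<lambda>t::real. p + t *\<^sub>R B)) = (\<lambda>_. Rr d E i p)"
      by (simp add: fun_eq_iff B_def Rr_const[OF edges])
    then have "((Rr d E i \<circ> (\<lambda>t::real. p + t *\<^sub>R B)) has_derivative (\<lambda>_. 0)) (at 0)"
      by simp
    from has_derivative_unique[OF c2 this] have "(DR \<circ> (\<lambda>x. 0 + x *\<^sub>R B)) 1 = 0" by simp
    then show ?thesis by simp
  qed
  have lin1: "bounded_linear (P1 d E i p)" using psi_d has_derivative_bounded_linear by blast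
  have lin2: "bounded_linear DR" using DR has_derivative_bounded_linear by blast
  have P1B: "P1 d E i p B = gg d E i (b i k) p"
  proof -
    have "P1 d E i p B = (\<Sum>j\<in>JJ E i. - (ff d i j p * (uu i j p \<bullet> b i k)))"
      unfolding P1_def
    proof (rule sum.cong[OF refl])
      fix j assume "j \<in> JJ E i"
      then have "j \<noteq> i" using i_notin_JJ[OF edges] by auto
      then have "uu i j B = - b i k" by (simp add: uu_def B_def Bfield_def)
      then show "ff d i j p * (uu i j p \<bullet> uu i j B) = - (ff d i j p * (uu i j p \<bullet> b i k))" by simp
    qed
    then show ?thesis by (simp add: gg_def sum_negf)
  qed
  have "lie (Xfield h d E b i k \<nu>) (psi d E) p = P1 d E i p (h \<nu> (psi_i d E i p) *\<^sub>R B) + DR (h \<nu> (psi_i d E i p) *\<^sub>R B)"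
    unfolding lie_def fd Xfield_def B_def ..
  also have "\<dots> = h \<nu> (psi_i d E i p) * (P1 d E i p B + DR B)"
    using linear_cmul[OF bounded_linear.linear[OF lin1]] linear_cmul[OF bounded_linear.linear[OF lin2]] by (simp add: algebra_simps)
  also have "\<dots> = h \<nu> (psi_i d E i p) * gg d E i (b i k) p" using DRB P1B by simp
  finally show "lie (Xfield h d E b i k \<nu>) (psi d E) p = h \<nu> (psi_i d E i p) * gg d E i (b i k) p" .
qed


theorem lemma5p1:
  fixes E :: "'v::finite set set"
    and d :: "'v set \<Rightarrow> real"
    and b :: "'v \<Rightarrow> 'n::finite \<Rightarrow> real^'n"
    and h :: "nat \<Rightarrow> real \<Rightarrow> real"
    and i :: 'v and k :: 'n and \<nu> :: nat and r :: real
  assumes E_ne: "E \<noteq> {}"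
    and E_edges: "\<forall>e\<in>E. card e = 2"
    and d_nonneg: "\<forall>e\<in>E. d e \<ge> 0"
    and b_orthonormal: "\<forall>i k l. b i k \<bullet> b i l = (if k = l then 1 else 0)"
    and h_i: "\<forall>\<mu>\<in>{1,2}. \<forall>y\<le>0. h \<mu> y = 0"
    and h_ii_bdd: "\<forall>\<mu>\<in>{1,2}. \<exists>M. \<forall>y>0. \<bar>h \<mu> y\<bar> \<le> M"
    and h_ii_C2: "\<forall>\<mu>\<in>{1,2}. C2_on {0<..} (h \<mu>)"
    and h_iii: "\<forall>\<mu>\<in>{1,2}. \<exists>c \<delta>. \<delta> > 0 \<and> (\<forall>y. 0 < y \<and> y < \<delta> \<longrightarrow> \<bar>h \<mu> y / y\<bar> \<le> c)"
    and h_iv: "\<forall>\<mu>\<in>{1,2}. \<exists>c \<delta>. \<delta> > 0 \<and> (\<forall>y. 0 < y \<and> y < \<delta> \<longrightarrow> \<bar>deriv (h \<mu>) y\<bar> \<le> c)"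
    and h_v: "\<forall>\<mu>\<in>{1,2}. \<exists>c \<delta>. \<delta> > 0 \<and> (\<forall>y. 0 < y \<and> y < \<delta> \<longrightarrow> \<bar>deriv (deriv (h \<mu>)) y * y\<bar> \<le> c)"
    and h_vi: "\<exists>r' c'. r' > 0 \<and> c' > 0 \<and> (\<forall>y. 0 < y \<and> y \<le> r' \<longrightarrow>
                 deriv (h 2) y * h 1 y - deriv (h 1) y * h 2 y \<le> - c' * y)"
    and nu: "\<nu> \<in> {1,2}"
    and r_pos: "r > 0"
  shows
    "C1_on UNIV (\<lambda>p::real^'n^'v. h \<nu> (psi_i d E i p))
     \<and> (\<exists>c>0. \<forall>p::real^'n^'v. psi_i d E i p \<le> r \<longrightarrow> \<bar>h \<nu> (psi_i d E i p)\<bar> \<le> c * psi_i d E i p)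
     \<and> (\<exists>c>0. \<forall>(p::real^'n^'v) v. psi_i d E i p \<le> r \<longrightarrow>
           \<bar>frechet_derivative (\<lambda>q. h \<nu> (psi_i d E i q)) (at p) v\<bar> \<le> c * sqrt (psi_i d E i p) * norm v)
     \<and> C2_on UNIV (lie (Xfield h d E b i k \<nu>) (psi d E))
     \<and> (\<exists>c>0. \<forall>p. psi_i d E i p \<le> r \<longrightarrow>
           \<bar>lie (Xfield h d E b i k \<nu>) (psi d E) p\<bar> \<le> c * psi_i d E i p powr (3/2))
     \<and> (\<exists>c>0. \<forall>p v. psi_i d E i p \<le> r \<longrightarrow>
           \<bar>frechet_derivative (lie (Xfield h d E b i k \<nu>) (psi d E)) (at p) v\<bar> \<le> c * psi_i d E i p * norm v)
     \<and> (\<exists>c>0. \<forall>p v w. psi_i d E i p \<le> r \<longrightarrow>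
           \<bar>D2 (lie (Xfield h d E b i k \<nu>) (psi d E)) p v w\<bar> \<le> c * sqrt (psi_i d E i p) * norm v * norm w)"
proof -
  obtain h1 h2 ch where hd: "\<forall>y>0. (h \<nu> has_real_derivative h1 y) (at y)"
    and h1d: "\<forall>y>0. (h1 has_real_derivative h2 y) (at y)" and h2c: "continuous_on {0<..} h2"
    and ch: "ch > 0" and hb: "\<forall>y. 0 < y \<and> y \<le> r \<longrightarrow> \<bar>h \<nu> y\<bar> \<le> ch * y \<and> \<bar>h1 y\<bar> \<le> ch \<and> \<bar>h2 y * y\<bar> \<le> ch"
  proof -
    have "\<exists>h1 h2 c. (\<forall>y>0. (h \<nu> has_real_derivative h1 y) (at y)) \<and> (\<forall>y>0. (h1 has_real_derivative h2 y) (at y))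
     \<and> continuous_on {0<..} h2 \<and> c > 0 \<and> (\<forall>y. 0 < y \<and> y \<le> r \<longrightarrow> \<bar>h \<nu> y\<bar> \<le> c * y \<and> \<bar>h1 y\<bar> \<le> c \<and> \<bar>h2 y * y\<bar> \<le> c)"
    proof (rule h_facts)
      show "\<forall>y\<le>0. h \<nu> y = 0" using h_i nu by blast
      show "\<exists>M. \<forall>y>0. \<bar>h \<nu> y\<bar> \<le> M" using h_ii_bdd nu by blast
      show "C2_on {0<..} (h \<nu>)" using h_ii_C2 nu by blast
      show "\<exists>c \<delta>. \<delta> > 0 \<and> (\<forall>y. 0 < y \<and> y < \<delta> \<longrightarrow> \<bar>h \<nu> y / y\<bar> \<le> c)" using h_iii nu by blast
      show "\<exists>c \<delta>. \<delta> > 0 \<and> (\<forall>y. 0 < y \<and> y < \<delta> \<longrightarrow> \<bar>deriv (h \<nu>) y\<bar> \<le> c)" using h_iv nu by blast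
      show "\<exists>c \<delta>. \<delta> > 0 \<and> (\<forall>y. 0 < y \<and> y < \<delta> \<longrightarrow> \<bar>deriv (deriv (h \<nu>)) y * y\<bar> \<le> c)" using h_v nu by blast
      show "r > 0" by (rule r_pos)
    qed
    then show ?thesis using that by (elim exE conjE) blast
  qed
  have bb1: "norm (b i k) = 1"
    using b_orthonormal by (simp add: norm_eq_sqrt_inner)
  interpret cc: conc d E i "b i k" r using r_pos bb1 by unfold_locales auto
  define K where "K = KK d E i r"
  have K: "K > 0" unfolding K_def by (rule cc.K_pos)
  define c where "c = ch + K"
  have cK: "K \<le> c" and cch: "ch \<le> c" and c0: "c > 0" using ch K by (simp_all add: c_def)
  have wk: "\<bar>x\<bar> \<le> a * X \<Longrightarrow> a \<le> c \<Longrightarrow> X \<ge> 0 \<Longrightarrow> \<bar>x\<bar> \<le> c * X" for x a X :: real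
    by (meson mult_right_mono order_trans)
  interpret co: core "psi_i d E i" "P1 d E i" "P2 d E i" "gg d E i (b i k)" "G1f d E i (b i k)" "G2f d E i (b i k)"
    "h \<nu>" h1 h2 r c
  proof unfold_locales
    show "\<And>x. (psi_i d E i has_derivative P1 d E i x) (at x)" by (rule psi_d)
    show "\<And>x v. ((\<lambda>y. P1 d E i y v) has_derivative (\<lambda>w. P2 d E i x w v)) (at x)" by (rule P1_d)
    show "\<And>w v. continuous_on UNIV (\<lambda>x. P2 d E i x w v)" by (rule P2_c)
    show "\<And>x. bilinear (P2 d E i x)" by (rule P2_bl)
    show "\<And>x. (gg d E i (b i k) has_derivative G1f d E i (b i k) x) (at x)" by (rule gg_d)
    show "\<And>x v. ((\<lambda>y. G1f d E i (b i k) y v) has_derivative (\<lambda>w. G2f d E i (b i k) x w v)) (at x)" by (rule G1_d)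
    show "\<And>w v. continuous_on UNIV (\<lambda>x. G2f d E i (b i k) x w v)" by (rule G2_c)
    show "\<And>x. bilinear (G2f d E i (b i k) x)" by (rule G2_bl)
    show "\<And>x. 0 \<le> psi_i d E i x" by (rule psi_i_nn)
    show "\<And>y. y \<le> 0 \<Longrightarrow> h \<nu> y = 0" using h_i nu by auto
    show "\<And>y. 0 < y \<Longrightarrow> (h \<nu> has_real_derivative h1 y) (at y)" using hd by auto
    show "\<And>y. 0 < y \<Longrightarrow> (h1 has_real_derivative h2 y) (at y)" using h1d by auto
    show "continuous_on {0<..} h2" by (rule h2c)
    show "0 < r" by (rule r_pos)
    show "0 < c" by (rule c0)
    show "\<And>y. 0 < y \<Longrightarrow> y \<le> r \<Longrightarrow> \<bar>h \<nu> y\<bar> \<le> c * y"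
      using hb cch by (meson less_imp_le mult_right_mono order_trans)
    show "\<And>y. 0 < y \<Longrightarrow> y \<le> r \<Longrightarrow> \<bar>h1 y\<bar> \<le> c" using hb cch by force
    show "\<And>y. 0 < y \<Longrightarrow> y \<le> r \<Longrightarrow> \<bar>h2 y * y\<bar> \<le> c" using hb cch by force
    show "\<bar>P1 d E i x v\<bar> \<le> c * sqrt (psi_i d E i x) * norm v" if a: "psi_i d E i x \<le> r" for x v :: "real^'n^'v"
    proof -
      have "\<bar>P1 d E i x v\<bar> \<le> K * (sqrt (psi_i d E i x) * norm v)"
        using cc.P1_b[OF a, of v] by (simp add: K_def mult.assoc)
      then have "\<bar>P1 d E i x v\<bar> \<le> c * (sqrt (psi_i d E i x) * norm v)"
        by (rule wk[OF _ cK]) (simp add: psi_i_nn)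
      then show ?thesis by (simp add: mult.assoc)
    qed
    show "\<bar>P2 d E i x w v\<bar> \<le> c * norm w * norm v" if a: "psi_i d E i x \<le> r" for x w v :: "real^'n^'v"
    proof -
      have "\<bar>P2 d E i x w v\<bar> \<le> c * (norm w * norm v)"
        by (rule wk[OF _ cK]) (use cc.P2_b[OF a, of w v] in \<open>simp_all add: K_def mult.assoc\<close>)
      then show ?thesis by (simp add: mult.assoc)
    qed
    show "\<bar>gg d E i (b i k) x\<bar> \<le> c * sqrt (psi_i d E i x)" if a: "psi_i d E i x \<le> r" for x :: "real^'n^'v"
      by (rule wk[OF _ cK]) (use cc.gg_b[OF a] psi_i_nn in \<open>simp_all add: K_def\<close>)
    show "\<bar>G1f d E i (b i k) x v\<bar> \<le> c * norm v" if a: "psi_i d E i x \<le> r" for x v :: "real^'n^'v"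
      by (rule wk[OF _ cK]) (use cc.G1_b[OF a, of v] in \<open>simp_all add: K_def\<close>)
    show "\<bar>G2f d E i (b i k) x w v\<bar> \<le> c * norm w * norm v" if a: "psi_i d E i x \<le> r" for x w v :: "real^'n^'v"
    proof -
      have "\<bar>G2f d E i (b i k) x w v\<bar> \<le> c * (norm w * norm v)"
        by (rule wk[OF _ cK]) (use cc.G2_b[OF a, of w v] in \<open>simp_all add: K_def mult.assoc\<close>)
      then show ?thesis by (simp add: mult.assoc)
    qed
  qed
  show ?thesis unfolding lie_eq[OF E_edges] by (rule co.main)
qed


end
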